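(* Let $\Gamma$ be an $n$-dimensional Bieberbach group with cyclic holonomy group $G$ of square-free order $\delta$ and translation subgroup $M$. Then $M=M_{n-1}\oplus\mathbb{Z}$ as $\mathbb{Z}G$-modules, where $\mathbb{Z}$ is a trivial $\mathbb{Z}G$-module generated by the $\delta$-th power of some element $c\in\Gamma$, and $\Gamma=M_{n-1}\rtimes C$ with $C=\langle c\rangle$.
   Context: An $n$-dimensional Bieberbach group is a torsion-free group $\Gamma$ with a normal maximal abelian subgroup $M\cong\mathbb{Z}^n$ of finite index; $G=\Gamma/M$ is the holonomy group, acting faithfully on $M$ by conjugation. *)

theory Defs
  imports "HOL-Algebra.Algebra" "HOL-Algebra.Free_Abelian_Groups" "HOL-Computational_Algebra.Squarefree"
begin

definition free_abelian_of_rank :: "('a, 'b) monoid_scheme \<Rightarrow> 'a set \<Rightarrow> nat \<Rightarrow> bool" where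
  "free_abelian_of_rank G H n \<longleftrightarrow>
     subgroup H G \<and> (subgroup_generated G H \<cong> free_Abelian_group {..<n})"

definition torsion_free :: "('a, 'b) monoid_scheme \<Rightarrow> bool" where
  "torsion_free G \<longleftrightarrow>
     (\<forall>x \<in> carrier G. \<forall>k::nat. k > 0 \<and> x [^]\<^bsub>G\<^esub> k = \<one>\<^bsub>G\<^esub> \<longrightarrow> x = \<one>\<^bsub>G\<^esub>)"

definition abelian_subset :: "('a, 'b) monoid_scheme \<Rightarrow> 'a set \<Rightarrow> bool" where
  "abelian_subset G H \<longleftrightarrow> (\<forall>x \<in> H. \<forall>y \<in> H. x \<otimes>\<^bsub>G\<^esub> y = y \<otimes>\<^bsub>G\<^esub> x)"

definition maximal_abelian_subgroup :: "('a, 'b) monoid_scheme \<Rightarrow> 'a set \<Rightarrow> bool" where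
  "maximal_abelian_subgroup G M \<longleftrightarrow>
     subgroup M G \<and> abelian_subset G M \<and>
     (\<forall>H. subgroup H G \<and> abelian_subset G H \<and> M \<subseteq> H \<longrightarrow> H = M)"

definition bieberbach_group :: "('a, 'b) monoid_scheme \<Rightarrow> 'a set \<Rightarrow> nat \<Rightarrow> bool" where
  "bieberbach_group \<Gamma> M n \<longleftrightarrow>
     group \<Gamma> \<and> torsion_free \<Gamma> \<and> M \<lhd> \<Gamma> \<and> maximal_abelian_subgroup \<Gamma> M \<and>
     free_abelian_of_rank \<Gamma> M n \<and> finite (rcosets\<^bsub>\<Gamma>\<^esub> M)"

end

theory Submission
  imports Defs
begin

type_synonym vec = "nat \<Rightarrow>\<^sub>0 int"

definition lc :: "(nat \<Rightarrow> vec) \<Rightarrow> nat \<Rightarrow> (nat \<Rightarrow> int) \<Rightarrow> vec" where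
  "lc b r a = (\<Sum>i<r. frag_cmul (a i) (b i))"

definition gclosed :: "vec set \<Rightarrow> bool" where
  "gclosed H \<longleftrightarrow> 0 \<in> H \<and> (\<forall>x\<in>H. \<forall>y\<in>H. x - y \<in> H)"

definition is_basis :: "vec set \<Rightarrow> (nat \<Rightarrow> vec) \<Rightarrow> nat \<Rightarrow> bool" where
  "is_basis H b r \<longleftrightarrow> (\<forall>i<r. b i \<in> H) \<and> (\<forall>x\<in>H. \<exists>a. x = lc b r a)
     \<and> (\<forall>a. lc b r a = 0 \<longrightarrow> (\<forall>i<r. a i = 0))"

lemma gclosed_zero: "gclosed H \<Longrightarrow> 0 \<in> H"
  by (simp add: gclosed_def)

lemma gclosed_diff: "gclosed H \<Longrightarrow> x \<in> H \<Longrightarrow> y \<in> H \<Longrightarrow> x - y \<in> H"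
  by (simp add: gclosed_def)

lemma gclosed_neg: "gclosed H \<Longrightarrow> x \<in> H \<Longrightarrow> - x \<in> H"
  using gclosed_diff[of H 0 x] by (simp add: gclosed_def)

lemma gclosed_add: "gclosed H \<Longrightarrow> x \<in> H \<Longrightarrow> y \<in> H \<Longrightarrow> x + y \<in> H"
  using gclosed_diff[of H x "- y"] gclosed_neg[of H y] by simp

lemma gclosed_cmul_nat: "gclosed H \<Longrightarrow> x \<in> H \<Longrightarrow> frag_cmul (int k) x \<in> H"
proof (induction k)
  case 0 then show ?case by (simp add: gclosed_zero)
next
  case (Suc k)
  have "frag_cmul (int (Suc k)) x = frag_cmul (int k) x + x"
    by (simp add: frag_cmul_distrib)
  then show ?case using Suc gclosed_add by simp
qed

lemma gclosed_cmul: assumes "gclosed H" "x \<in> H" shows "frag_cmul k x \<in> H"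
proof (cases "k \<ge> 0")
  case True
  then obtain m where "k = int m" by (metis nonneg_eq_int)
  then show ?thesis using gclosed_cmul_nat assms by simp
next
  case False
  then obtain m where "k = - int m" by (metis le_cases neg_0_le_iff_le nonneg_eq_int minus_minus)
  then have "frag_cmul k x = - frag_cmul (int m) x" by simp
  then show ?thesis using gclosed_cmul_nat gclosed_neg assms by metis
qed

lemma gclosed_sum: "gclosed H \<Longrightarrow> (\<And>i. i \<in> I \<Longrightarrow> g i \<in> H) \<Longrightarrow> sum g I \<in> H"
  by (induction I rule: infinite_finite_induct) (auto simp: gclosed_zero gclosed_add)

lemma lc_in: "gclosed H \<Longrightarrow> (\<And>i. i < r \<Longrightarrow> b i \<in> H) \<Longrightarrow> lc b r a \<in> H"
  unfolding lc_def by (rule gclosed_sum) (auto intro: gclosed_cmul)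

lemma lc_Suc: "lc b (Suc r) a = lc b r a + frag_cmul (a r) (b r)"
  by (simp add: lc_def)

lemma lc_0 [simp]: "lc b 0 a = 0"
  by (simp add: lc_def)

lemma lc_add: "lc b r (\<lambda>i. a i + a' i) = lc b r a + lc b r a'"
  by (simp add: lc_def frag_cmul_distrib sum.distrib)

lemma lc_diff: "lc b r (\<lambda>i. a i - a' i) = lc b r a - lc b r a'"
  by (simp add: lc_def frag_cmul_diff_distrib sum_subtractf)

lemma lc_cmul: "lc b r (\<lambda>i. k * a i) = frag_cmul k (lc b r a)"
  by (simp add: lc_def frag_cmul_sum)

lemma lc_cong: "(\<And>i. i < r \<Longrightarrow> a i = a' i) \<Longrightarrow> (\<And>i. i < r \<Longrightarrow> b i = b' i) \<Longrightarrow> lc b r a = lc b' r a'"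
  by (simp add: lc_def)

lemma lookup_lc: "Poly_Mapping.lookup (lc b r a) j = (\<Sum>i<r. a i * Poly_Mapping.lookup (b i) j)"
  by (simp add: lc_def lookup_sum)

lemma int_ideal:
  fixes S :: "int set"
  assumes cl: "\<And>x y. x \<in> S \<Longrightarrow> y \<in> S \<Longrightarrow> x - y \<in> S" and x0: "x0 \<in> S" "x0 \<noteq> 0"
  shows "\<exists>d\<in>S. d > 0 \<and> (\<forall>x\<in>S. d dvd x)"
proof -
  have z: "0 \<in> S" using cl[OF x0(1) x0(1)] by simp
  have neg: "- x \<in> S" if "x \<in> S" for x using cl[OF z that] by simp
  have add: "x + y \<in> S" if "x \<in> S" "y \<in> S" for x y using cl[OF that(1) neg[OF that(2)]] by simp
  have muln: "int k * x \<in> S" if "x \<in> S" for x k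
    by (induction k) (auto simp: z add that distrib_right)
  have mul: "k * x \<in> S" if "x \<in> S" for x k
  proof (cases "k \<ge> 0")
    case True then show ?thesis using muln[OF that, of "nat k"] by simp
  next
    case False then show ?thesis using neg[OF muln[OF that, of "nat (-k)"]] by simp
  qed
  define P where "P n \<longleftrightarrow> n > 0 \<and> int n \<in> S" for n :: nat
  have "P (nat \<bar>x0\<bar>)" unfolding P_def using x0 neg by (cases "x0 \<ge> 0") auto
  then have Pd: "P (LEAST n. P n)" by (rule LeastI)
  define d where "d = int (LEAST n. P n)"
  have dS: "d \<in> S" "d > 0" using Pd by (auto simp: P_def d_def)
  have "d dvd x" if "x \<in> S" for x
  proof -
    have "x mod d = x - (x div d) * d" by (simp add: minus_div_mult_eq_mod)
    then have "x mod d \<in> S" using cl[OF that mul[OF dS(1)]] by simp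
    moreover have "x mod d \<ge> 0" "x mod d < d" using dS by auto
    ultimately have "x mod d = 0"
    proof -
      assume a: "x mod d \<in> S" "x mod d \<ge> 0" "x mod d < d"
      show ?thesis
      proof (rule ccontr)
        assume "x mod d \<noteq> 0"
        then have "P (nat (x mod d))" using a unfolding P_def by simp
        then have "(LEAST n. P n) \<le> nat (x mod d)" by (rule Least_le)
        then show False using a unfolding d_def by simp
      qed
    qed
    then show ?thesis by (simp add: dvd_eq_mod_eq_0)
  qed
  then show ?thesis using dS by blast
qed

lemma lattice_basis:
  "H \<subseteq> {x. Poly_Mapping.keys x \<subseteq> {..<n}} \<Longrightarrow> gclosed H \<Longrightarrow> \<exists>b r. is_basis H b r"
proof (induction n arbitrary: H)
  case 0
  then have "H = {0}" using gclosed_zero[of H] by auto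
  then have "is_basis H (\<lambda>_. 0) 0" by (simp add: is_basis_def)
  then show ?case by blast
next
  case (Suc n)
  define H' where "H' = {x\<in>H. Poly_Mapping.lookup x n = 0}"
  have H'sub: "H' \<subseteq> {x. Poly_Mapping.keys x \<subseteq> {..<n}}"
  proof
    fix x assume "x \<in> H'"
    then have "Poly_Mapping.keys x \<subseteq> {..<Suc n}" "Poly_Mapping.lookup x n = 0" using Suc.prems by (auto simp: H'_def)
    then show "x \<in> {x. Poly_Mapping.keys x \<subseteq> {..<n}}" by (auto simp: in_keys_iff less_Suc_eq)
  qed
  have H'cl: "gclosed H'" using Suc.prems(2) by (auto simp: gclosed_def H'_def lookup_minus)
  obtain b r where b: "is_basis H' b r" using Suc.IH[OF H'sub H'cl] by blast
  show ?case
  proof (cases "\<forall>x\<in>H. Poly_Mapping.lookup x n = 0")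
    case True
    then have "H' = H" by (auto simp: H'_def)
    then show ?thesis using b by blast
  next
    case False
    define S where "S = (\<lambda>x. Poly_Mapping.lookup x n) ` H"
    from False obtain x0 where x0: "x0 \<in> H" "Poly_Mapping.lookup x0 n \<noteq> 0" by blast
    have "\<exists>d\<in>S. d > 0 \<and> (\<forall>x\<in>S. d dvd x)"
    proof (rule int_ideal[of S "Poly_Mapping.lookup x0 n"])
      show "x - y \<in> S" if "x \<in> S" "y \<in> S" for x y
        using that Suc.prems(2) unfolding S_def
        by (auto simp: gclosed_def image_iff lookup_minus) (metis lookup_minus)
      from x0 show "Poly_Mapping.lookup x0 n \<in> S" "Poly_Mapping.lookup x0 n \<noteq> 0" by (auto simp: S_def)
    qed
    then obtain h0 where h0: "h0 \<in> H" "Poly_Mapping.lookup h0 n > 0" "\<And>x. x \<in> H \<Longrightarrow> Poly_Mapping.lookup h0 n dvd Poly_Mapping.lookup x n"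
      unfolding S_def by auto
    define d where "d = Poly_Mapping.lookup h0 n"
    define b' where "b' = b(r := h0)"
    have "is_basis H b' (Suc r)"
      unfolding is_basis_def
    proof (intro conjI allI impI ballI)
      fix i assume "i < Suc r"
      then show "b' i \<in> H" using b h0 by (auto simp: b'_def is_basis_def H'_def less_Suc_eq)
    next
      fix x assume x: "x \<in> H"
      then obtain k where k: "Poly_Mapping.lookup x n = d * k" using h0(3) unfolding d_def by (meson dvdE)
      have "x - frag_cmul k h0 \<in> H" using x h0(1) Suc.prems(2) gclosed_cmul gclosed_diff by blast
      moreover have "Poly_Mapping.lookup (x - frag_cmul k h0) n = 0" using k by (simp add: lookup_minus d_def)
      ultimately have "x - frag_cmul k h0 \<in> H'" by (simp add: H'_def)
      then obtain a where a: "x - frag_cmul k h0 = lc b r a" using b by (auto simp: is_basis_def)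
      have "lc b' (Suc r) (a(r := k)) = lc b r a + frag_cmul k h0"
        by (simp add: lc_Suc b'_def) (rule lc_cong, auto)
      then show "\<exists>a. x = lc b' (Suc r) a" using a by (metis diff_add_cancel)
    next
      fix a i assume z: "lc b' (Suc r) a = 0" and i: "i < Suc r"
      have eq: "lc b' (Suc r) a = lc b r a + frag_cmul (a r) h0"
        by (simp add: lc_Suc b'_def) (rule lc_cong, auto)
      have bn: "Poly_Mapping.lookup (b j) n = 0" if "j < r" for j using b that by (auto simp: is_basis_def H'_def)
      have "Poly_Mapping.lookup (lc b r a) n = 0" by (simp add: lookup_lc bn)
      then have "a r * d = 0" using arg_cong[OF z, of "\<lambda>v. Poly_Mapping.lookup v n"] eq by (simp add: lookup_add d_def)
      then have ar: "a r = 0" using h0(2) by (simp add: d_def)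
      then have "lc b r a = 0" using z eq by simp
      then have "\<forall>j<r. a j = 0" using b by (auto simp: is_basis_def)
      then show "a i = 0" using ar i by (auto simp: less_Suc_eq)
    qed
    then show ?thesis by blast
  qed
qed

lemma gclosed_subgroup:
  assumes "gclosed H" "H \<subseteq> {x. Poly_Mapping.keys x \<subseteq> S}"
  shows "subgroup H (free_Abelian_group S)"
proof
  show "H \<subseteq> carrier (free_Abelian_group S)" using assms(2) by auto
  show "\<one>\<^bsub>free_Abelian_group S\<^esub> \<in> H" using assms(1) by (simp add: gclosed_zero)
  fix x y assume "x \<in> H" "y \<in> H"
  then show "x \<otimes>\<^bsub>free_Abelian_group S\<^esub> y \<in> H" using assms(1) by (simp add: gclosed_add)
  show "inv\<^bsub>free_Abelian_group S\<^esub> x \<in> H" using \<open>x \<in> H\<close> assms by (auto simp: gclosed_neg)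
qed

lemma basis_iso:
  assumes b: "is_basis H b r" and cl: "gclosed H" and sub: "H \<subseteq> {x. Poly_Mapping.keys x \<subseteq> {..<n}}"
  shows "subgroup_generated (free_Abelian_group {..<n}) H \<cong> free_Abelian_group {..<r}"
proof -
  let ?F = "free_Abelian_group {..<n}"
  let ?h = "\<lambda>a. lc b r (Poly_Mapping.lookup a)"
  have sg: "subgroup H ?F" by (rule gclosed_subgroup[OF cl sub])
  have car: "carrier (subgroup_generated ?F H) = H"
    using subgroup.carrier_subgroup_generated_subgroup[OF sg] .
  have mul: "x \<otimes>\<^bsub>subgroup_generated ?F H\<^esub> y = x + y" for x y
    by (simp add: subgroup_generated_def)
  have bH: "\<And>i. i < r \<Longrightarrow> b i \<in> H" using b by (simp add: is_basis_def)
  have "?h \<in> iso (free_Abelian_group {..<r}) (subgroup_generated ?F H)"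
  proof (rule isoI)
    show "?h \<in> hom (free_Abelian_group {..<r}) (subgroup_generated ?F H)"
    proof (rule homI)
      show "?h x \<in> carrier (subgroup_generated ?F H)" for x
        using car lc_in[OF cl bH] by simp
      show "?h (x \<otimes>\<^bsub>free_Abelian_group {..<r}\<^esub> y) = ?h x \<otimes>\<^bsub>subgroup_generated ?F H\<^esub> ?h y" for x y
      proof -
        have "Poly_Mapping.lookup (x + y) = (\<lambda>i. Poly_Mapping.lookup x i + Poly_Mapping.lookup y i)"
          by (simp add: fun_eq_iff lookup_add)
        then have "?h (x + y) = ?h x + ?h y" using lc_add[of b r "Poly_Mapping.lookup x" "Poly_Mapping.lookup y"] by simp
        then show ?thesis by (simp add: mul)
      qed
    qed
    show "bij_betw ?h (carrier (free_Abelian_group {..<r})) (carrier (subgroup_generated ?F H))"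
    proof (rule bij_betw_imageI)
      show "inj_on ?h (carrier (free_Abelian_group {..<r}))"
      proof (rule inj_onI)
        fix x y assume x: "x \<in> carrier (free_Abelian_group {..<r})" and y: "y \<in> carrier (free_Abelian_group {..<r})"
          and e: "?h x = ?h y"
        have "lc b r (\<lambda>i. Poly_Mapping.lookup x i - Poly_Mapping.lookup y i) = 0"
          using e by (simp add: lc_diff)
        then have "\<forall>i<r. Poly_Mapping.lookup x i - Poly_Mapping.lookup y i = 0"
          using b unfolding is_basis_def by blast
        moreover have "Poly_Mapping.lookup x i = 0 \<and> Poly_Mapping.lookup y i = 0" if "\<not> i < r" for i
          using x y that by (auto simp: in_keys_iff)
        ultimately show "x = y"
          by (metis poly_mapping_eqI eq_iff_diff_eq_0 not_less)
      qed
      show "?h ` carrier (free_Abelian_group {..<r}) = carrier (subgroup_generated ?F H)"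
      proof
        show "?h ` carrier (free_Abelian_group {..<r}) \<subseteq> carrier (subgroup_generated ?F H)"
          using car lc_in[OF cl bH] by auto
        show "carrier (subgroup_generated ?F H) \<subseteq> ?h ` carrier (free_Abelian_group {..<r})"
        proof
          fix x assume "x \<in> carrier (subgroup_generated ?F H)"
          then have "x \<in> H" using car by simp
          then obtain a where a: "x = lc b r a" using b by (auto simp: is_basis_def)
          define v where "v = Abs_poly_mapping (\<lambda>i. if i < r then a i else 0)"
          have fin: "finite {i. (if i < r then a i else 0) \<noteq> 0}"
            by (rule finite_subset[of _ "{..<r}"]) auto
          have lv: "Poly_Mapping.lookup v = (\<lambda>i. if i < r then a i else 0)"
            unfolding v_def using fin by (simp add: Abs_poly_mapping_inverse)
          have "Poly_Mapping.keys v \<subseteq> {..<r}" by (auto simp: in_keys_iff lv split: if_splits)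
          moreover have "?h v = x" unfolding a lv by (rule lc_cong) auto
          ultimately show "x \<in> ?h ` carrier (free_Abelian_group {..<r})" by force
        qed
      qed
    qed
  qed
  then have "free_Abelian_group {..<r} \<cong> subgroup_generated ?F H" by (auto simp: is_iso_def)
  then show ?thesis by (simp add: group.iso_sym)
qed

lemma basis_functional:
  assumes b: "is_basis H b r" and i: "i < r"
  shows "\<exists>\<mu>. (\<forall>x\<in>H. \<forall>y\<in>H. \<mu> (x + y) = \<mu> x + \<mu> y) \<and> (\<forall>a. \<mu> (lc b r a) = a i)"
proof -
  define \<mu> where "\<mu> x = (SOME a. x = lc b r a) i" for x
  have key: "\<mu> (lc b r a) = a i" for a
  proof -
    have "\<exists>a'. lc b r a = lc b r a'" by blast
    then have e: "lc b r a = lc b r (SOME a'. lc b r a = lc b r a')" by (rule someI_ex)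
    have "lc b r (\<lambda>j. (SOME a'. lc b r a = lc b r a') j - a j) = 0"
      by (simp add: lc_diff flip: e)
    then have "(SOME a'. lc b r a = lc b r a') i - a i = 0" using b i unfolding is_basis_def by blast
    then show ?thesis by (simp add: \<mu>_def)
  qed
  have sp: "\<forall>x\<in>H. \<exists>a. x = lc b r a" using b unfolding is_basis_def by (rule conjunct1[OF conjunct2])
  have "\<mu> (x + y) = \<mu> x + \<mu> y" if xy: "x \<in> H" "y \<in> H" for x y
  proof -
    obtain a where a1: "x = lc b r a" using sp xy(1) by blast
    obtain a' where a2: "y = lc b r a'" using sp xy(2) by blast
    note aa = a1 a2
    have "x + y = lc b r (\<lambda>i. a i + a' i)" using aa by (simp only: lc_add)
    then show ?thesis using aa key by simp
  qed
  then show ?thesis using key by blast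
qed

definition Cn :: "nat \<Rightarrow> vec set" where "Cn n = {x. Poly_Mapping.keys x \<subseteq> {..<n}}"

lemma gclosed_Cn: "gclosed (Cn n)"
  unfolding gclosed_def Cn_def using keys_diff by fastforce

lemma sum_block: "(\<Sum>k<(p::nat)*q. g k) = (\<Sum>i<p. \<Sum>j<q. g (q*i+j))"
proof -
  have "(\<Sum>k<p*q. g k) = (\<Sum>i<p. sum g {i*q..<i*q+q})" using sum.nat_group[of g q p] by simp
  also have "\<dots> = (\<Sum>i<p. \<Sum>j<q. g (q*i+j))"
  proof (rule sum.cong[OF refl])
    fix i
    show "sum g {i*q..<i*q+q} = (\<Sum>j<q. g (q*i+j))"
      using sum.shift_bounds_nat_ivl[of g 0 "i*q" q] by (simp add: atLeast0LessThan add.commute mult.commute)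
  qed
  finally show ?thesis .
qed

lemma sum_cyc: "g d = g 0 \<Longrightarrow> (\<Sum>k<d. g (Suc k)) = (\<Sum>k<d. (g::nat \<Rightarrow> 'a::ab_group_add) k)"
  using sum.lessThan_Suc_shift[of g d] sum.lessThan_Suc[of g d] by (metis add.commute add_right_cancel)

locale linop =
  fixes n :: nat and \<tau> :: "vec \<Rightarrow> vec"
  assumes \<tau>C: "x \<in> Cn n \<Longrightarrow> \<tau> x \<in> Cn n"
    and \<tau>add: "x \<in> Cn n \<Longrightarrow> y \<in> Cn n \<Longrightarrow> \<tau> (x + y) = \<tau> x + \<tau> y"
begin

lemma pw_C: "x \<in> Cn n \<Longrightarrow> (\<tau>^^j) x \<in> Cn n"
  by (induction j) (auto intro: \<tau>C)

lemma pw_add: "x \<in> Cn n \<Longrightarrow> y \<in> Cn n \<Longrightarrow> (\<tau>^^j) (x + y) = (\<tau>^^j) x + (\<tau>^^j) y"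
  by (induction j) (auto simp: \<tau>add pw_C)

lemma pw_zero: "(\<tau>^^j) 0 = 0"
proof -
  have z: "0 \<in> Cn n" by (simp add: Cn_def)
  have "(\<tau>^^j) (0 + 0) = (\<tau>^^j) 0 + (\<tau>^^j) 0" by (rule pw_add[OF z z])
  then show ?thesis by simp
qed

lemma pw_diff: "x \<in> Cn n \<Longrightarrow> y \<in> Cn n \<Longrightarrow> (\<tau>^^j) (x - y) = (\<tau>^^j) x - (\<tau>^^j) y"
proof -
  assume x: "x \<in> Cn n" and y: "y \<in> Cn n"
  have xy: "x - y \<in> Cn n" using gclosed_diff[OF gclosed_Cn x y] .
  have "(\<tau>^^j) (x - y + y) = (\<tau>^^j) (x - y) + (\<tau>^^j) y" by (rule pw_add[OF xy y])
  then show ?thesis by (simp add: algebra_simps)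
qed

lemma pw_sum: "(\<And>i. i \<in> I \<Longrightarrow> g i \<in> Cn n) \<Longrightarrow> (\<tau>^^j) (sum g I) = (\<Sum>i\<in>I. (\<tau>^^j) (g i))"
proof (induction I rule: infinite_finite_induct)
  case (insert x F)
  have "sum g F \<in> Cn n" using insert by (intro gclosed_sum[OF gclosed_Cn]) auto
  then show ?case using insert by (simp add: pw_add)
qed (auto simp: pw_zero)

lemma pw_cmul: "x \<in> Cn n \<Longrightarrow> (\<tau>^^j) (frag_cmul (int k) x) = frag_cmul (int k) ((\<tau>^^j) x)"
proof (induction k)
  case 0 then show ?case by (simp add: pw_zero)
next
  case (Suc k)
  have e: "frag_cmul (1 + int k) x = frag_cmul (int k) x + x" for x :: vec
    by (simp add: frag_cmul_distrib)
  show ?case using Suc by (simp add: e pw_add gclosed_cmul[OF gclosed_Cn])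
qed

lemma nat_cmul_sum: "frag_cmul (int k) x = (\<Sum>i<k. x)"
  by (induction k) (simp_all add: frag_cmul_distrib)

end

lemma pprime_int: "Factorial_Ring.prime (p::nat) \<Longrightarrow> Factorial_Ring.prime (int p)"
  by simp

locale plsetup = linop +
  fixes \<delta> p q :: nat and \<zeta> :: vec
  assumes \<tau>\<delta>: "x \<in> Cn n \<Longrightarrow> (\<tau>^^\<delta>) x = x"
    and \<delta>pq: "\<delta> = p * q" and pp: "Factorial_Ring.prime p" and pq: "\<not> p dvd q"
    and \<zeta>C: "\<zeta> \<in> Cn n" and \<zeta>fix: "\<tau> \<zeta> = \<zeta>"
    and hyp: "\<And>y. y \<in> Cn n \<Longrightarrow> (\<Sum>i<p. (\<tau>^^(q*i)) y) \<noteq> \<zeta>"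
begin

definition Nm where "Nm y = (\<Sum>i<p. (\<tau>^^(q*i)) y)"
definition NG where "NG y = (\<Sum>k<\<delta>. (\<tau>^^k) y)"

lemma Nm_C: "y \<in> Cn n \<Longrightarrow> Nm y \<in> Cn n"
  unfolding Nm_def by (rule gclosed_sum[OF gclosed_Cn]) (simp add: pw_C)

lemma NG_C: "y \<in> Cn n \<Longrightarrow> NG y \<in> Cn n"
  unfolding NG_def by (rule gclosed_sum[OF gclosed_Cn]) (simp add: pw_C)

lemma Nm_diff: "x \<in> Cn n \<Longrightarrow> y \<in> Cn n \<Longrightarrow> Nm (x - y) = Nm x - Nm y"
  unfolding Nm_def by (simp add: pw_diff sum_subtractf)

lemma NG_add: "x \<in> Cn n \<Longrightarrow> y \<in> Cn n \<Longrightarrow> NG (x + y) = NG x + NG y"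
  unfolding NG_def by (simp add: pw_add sum.distrib)

lemma NG_Nm: "y \<in> Cn n \<Longrightarrow> NG y = Nm (\<Sum>j<q. (\<tau>^^j) y)"
proof -
  assume y: "y \<in> Cn n"
  have "NG y = (\<Sum>k<p*q. (\<tau>^^k) y)" unfolding NG_def by (simp add: \<delta>pq)
  also have "\<dots> = (\<Sum>i<p. \<Sum>j<q. (\<tau>^^(q*i+j)) y)" by (rule sum_block)
  also have "\<dots> = (\<Sum>i<p. (\<tau>^^(q*i)) (\<Sum>j<q. (\<tau>^^j) y))"
    by (rule sum.cong[OF refl]) (simp add: pw_sum pw_C y funpow_add)
  finally show ?thesis by (simp add: Nm_def)
qed

lemma NG_tau: "y \<in> Cn n \<Longrightarrow> NG (\<tau> y) = NG y"
proof -
  assume y: "y \<in> Cn n"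
  have "NG (\<tau> y) = (\<Sum>k<\<delta>. (\<tau>^^(Suc k)) y)" unfolding NG_def
    by (rule sum.cong[OF refl]) (simp add: funpow_Suc_right del: funpow.simps)
  also have "\<dots> = NG y" unfolding NG_def by (rule sum_cyc) (simp add: \<tau>\<delta> y)
  finally show ?thesis .
qed

lemma pw_zeta: "(\<tau>^^j) \<zeta> = \<zeta>"
  by (induction j) (simp_all add: \<zeta>fix)

lemma PL: "\<exists>\<psi>. (\<forall>x\<in>Cn n. \<forall>y\<in>Cn n. \<psi> (x + y) = \<psi> x + \<psi> y) \<and> (\<forall>x\<in>Cn n. \<psi> (\<tau> x) = \<psi> x)
             \<and> \<not> int p dvd \<psi> \<zeta>"
proof -
  define I where "I = Nm ` Cn n"
  have Isub: "I \<subseteq> Cn n" using Nm_C by (auto simp: I_def)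
  have Icl: "gclosed I"
    unfolding gclosed_def I_def
  proof (intro conjI ballI)
    have "Nm 0 = 0" by (simp add: Nm_def pw_zero)
    then show "0 \<in> Nm ` Cn n" by (metis image_eqI gclosed_zero[OF gclosed_Cn])
    fix x y assume "x \<in> Nm ` Cn n" "y \<in> Nm ` Cn n"
    then obtain x' y' where "x' \<in> Cn n" "y' \<in> Cn n" "x = Nm x'" "y = Nm y'" by auto
    then show "x - y \<in> Nm ` Cn n" using Nm_diff gclosed_diff[OF gclosed_Cn] by (metis image_eqI)
  qed
  obtain b r where b: "is_basis I b r" using lattice_basis[OF Isub[unfolded Cn_def] Icl] by blast
  have pz: "frag_cmul (int p) \<zeta> = Nm \<zeta>" by (simp add: Nm_def pw_zeta nat_cmul_sum)
  then have pzI: "frag_cmul (int p) \<zeta> \<in> I" using \<zeta>C by (simp add: I_def)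
  then obtain a where a: "frag_cmul (int p) \<zeta> = lc b r a" using b by (auto simp: is_basis_def)
  have "\<exists>i<r. \<not> int p dvd a i"
  proof (rule ccontr)
    assume "\<not> (\<exists>i<r. \<not> int p dvd a i)"
    then have dv: "\<forall>i<r. a i = int p * (a i div int p)" by simp
    have "lc b r a = lc b r (\<lambda>i. int p * (a i div int p))" by (rule lc_cong) (use dv in auto)
    also have "\<dots> = frag_cmul (int p) (lc b r (\<lambda>i. a i div int p))" by (rule lc_cmul)
    finally have e1: "frag_cmul (int p) \<zeta> = frag_cmul (int p) (lc b r (\<lambda>i. a i div int p))" using a by simp
    have "lc b r (\<lambda>i. a i div int p) \<in> I" using b by (intro lc_in[OF Icl]) (auto simp: is_basis_def)
    then obtain y where y: "y \<in> Cn n" "lc b r (\<lambda>i. a i div int p) = Nm y" by (auto simp: I_def)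
    have p0: "int p \<noteq> 0" using pp by auto
    have "\<zeta> = Nm y"
    proof (rule poly_mapping_eqI)
      fix k
      have "int p * Poly_Mapping.lookup \<zeta> k = int p * Poly_Mapping.lookup (Nm y) k"
        using arg_cong[OF e1, of "\<lambda>v. Poly_Mapping.lookup v k"] y(2) by simp
      then show "Poly_Mapping.lookup \<zeta> k = Poly_Mapping.lookup (Nm y) k" using p0 by simp
    qed
    then show False using hyp[OF y(1)] by (simp add: Nm_def)
  qed
  then obtain i where i: "i < r" "\<not> int p dvd a i" by blast
  obtain \<mu> where \<mu>: "\<forall>x\<in>I. \<forall>y\<in>I. \<mu> (x + y) = \<mu> x + \<mu> y" "\<forall>a. \<mu> (lc b r a) = a i"
    using basis_functional[OF b i(1)] by blast
  have NGI: "NG x \<in> I" if "x \<in> Cn n" for x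
  proof -
    have "(\<Sum>j<q. (\<tau>^^j) x) \<in> Cn n" by (rule gclosed_sum[OF gclosed_Cn]) (simp add: pw_C that)
    then show ?thesis using NG_Nm[OF that] by (simp add: I_def)
  qed
  define \<psi> where "\<psi> x = \<mu> (NG x)" for x
  have add: "\<forall>x\<in>Cn n. \<forall>y\<in>Cn n. \<psi> (x + y) = \<psi> x + \<psi> y"
    by (simp add: \<psi>_def NG_add NGI \<mu>(1))
  have inv: "\<forall>x\<in>Cn n. \<psi> (\<tau> x) = \<psi> x" by (simp add: \<psi>_def NG_tau)
  have "NG \<zeta> = frag_cmul (int \<delta>) \<zeta>" by (simp add: NG_def pw_zeta nat_cmul_sum)
  also have "\<dots> = frag_cmul (int q) (frag_cmul (int p) \<zeta>)" by (simp add: \<delta>pq mult.commute)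
  also have "\<dots> = lc b r (\<lambda>j. int q * a j)" by (simp add: a lc_cmul)
  finally have "\<psi> \<zeta> = int q * a i" by (simp add: \<psi>_def \<mu>(2))
  moreover have "\<not> int p dvd int q * a i"
  proof
    assume "int p dvd int q * a i"
    then have "int p dvd int q \<or> int p dvd a i" using pprime_int[OF pp] prime_dvd_mult_iff by blast
    then show False using i(2) pq by auto
  qed
  ultimately show ?thesis using add inv by metis
qed

end

definition addv :: "nat \<Rightarrow> (vec \<Rightarrow> int) \<Rightarrow> bool" where
  "addv n \<psi> \<longleftrightarrow> (\<forall>x\<in>Cn n. \<forall>y\<in>Cn n. \<psi> (x + y) = \<psi> x + \<psi> y)"

lemma addv_zero: "addv n \<psi> \<Longrightarrow> \<psi> 0 = 0"
  using gclosed_zero[OF gclosed_Cn, of n] unfolding addv_def by (metis add.right_neutral add_left_imp_eq add_0)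

lemma addv_diff: "addv n \<psi> \<Longrightarrow> x \<in> Cn n \<Longrightarrow> y \<in> Cn n \<Longrightarrow> \<psi> (x - y) = \<psi> x - \<psi> y"
proof -
  assume a: "addv n \<psi>" "x \<in> Cn n" "y \<in> Cn n"
  have "x - y \<in> Cn n" using gclosed_diff[OF gclosed_Cn a(2,3)] .
  then have "\<psi> (x - y + y) = \<psi> (x - y) + \<psi> y" using a unfolding addv_def by blast
  then show ?thesis by simp
qed

lemma addv_cmul: assumes "addv n \<psi>" "x \<in> Cn n" shows "\<psi> (frag_cmul k x) = k * \<psi> x"
proof -
  have nat: "\<psi> (frag_cmul (int m) x) = int m * \<psi> x" for m
  proof (induction m)
    case 0 then show ?case using addv_zero[OF assms(1)] by simp
  next
    case (Suc m)
    have "frag_cmul (int (Suc m)) x = frag_cmul (int m) x + x" by (simp add: frag_cmul_distrib)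
    moreover have "frag_cmul (int m) x \<in> Cn n" by (rule gclosed_cmul[OF gclosed_Cn assms(2)])
    ultimately show ?case using Suc assms unfolding addv_def by (simp add: distrib_right)
  qed
  show ?thesis
  proof (cases "k \<ge> 0")
    case True then show ?thesis using nat[of "nat k"] by simp
  next
    case False
    have c1: "frag_cmul k x \<in> Cn n" "frag_cmul (-k) x \<in> Cn n"
      using gclosed_cmul[OF gclosed_Cn assms(2)] by auto
    have "\<psi> (frag_cmul k x + frag_cmul (-k) x) = \<psi> (frag_cmul k x) + \<psi> (frag_cmul (-k) x)"
      using assms(1) c1 unfolding addv_def by blast
    moreover have "frag_cmul k x + frag_cmul (-k) x = 0" by (simp flip: frag_cmul_distrib)
    moreover have "\<psi> (frag_cmul (-k) x) = (-k) * \<psi> x" using nat[of "nat (-k)"] False by simp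
    ultimately show ?thesis using addv_zero[OF assms(1)] by (simp add: algebra_simps)
  qed
qed

lemma coprime_no_prime:
  fixes d :: int and \<delta> :: nat
  assumes "\<delta> > 0" "\<And>p::nat. Factorial_Ring.prime p \<Longrightarrow> p dvd \<delta> \<Longrightarrow> \<not> int p dvd d"
  shows "coprime d (int \<delta>)"
proof (rule ccontr)
  assume nc: "\<not> coprime d (int \<delta>)"
  define g where "g = gcd d (int \<delta>)"
  have "g \<noteq> 0" using assms(1) by (simp add: g_def)
  moreover have "\<not> is_unit g" using nc by (simp add: g_def coprime_iff_gcd_eq_1 is_unit_gcd)
  ultimately obtain b where b: "b dvd g" "Factorial_Ring.prime b" using prime_divisor_exists by blast
  then have "b > 0" by (simp add: prime_gt_0_int)
  then obtain p where p: "b = int p" by (metis pos_int_cases)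
  have pp: "Factorial_Ring.prime p" using b(2) p by simp
  have "int p dvd int \<delta>" "int p dvd d" using b(1) p by (auto simp: g_def)
  then show False using assms(2)[OF pp] by simp
qed

lemma PL2:
  assumes lin: "linop n \<tau>" and \<tau>\<delta>: "\<And>x. x \<in> Cn n \<Longrightarrow> (\<tau>^^\<delta>) x = x"
    and \<delta>: "\<delta> > 0" "squarefree \<delta>"
    and \<zeta>: "\<zeta> \<in> Cn n" "\<tau> \<zeta> = \<zeta>"
    and hyp: "\<And>p q y. Factorial_Ring.prime p \<Longrightarrow> \<delta> = p * q \<Longrightarrow> y \<in> Cn n \<Longrightarrow> (\<Sum>i<p. (\<tau>^^(q*i)) y) \<noteq> \<zeta>"
    and nz: "\<delta> = 1 \<Longrightarrow> \<exists>\<psi>. addv n \<psi> \<and> (\<forall>x\<in>Cn n. \<psi> (\<tau> x) = \<psi> x) \<and> \<psi> \<zeta> \<noteq> 0"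
  shows "\<exists>\<psi>. addv n \<psi> \<and> (\<forall>x\<in>Cn n. \<psi> (\<tau> x) = \<psi> x) \<and> coprime (\<psi> \<zeta>) (int \<delta>) \<and> \<psi> \<zeta> > 0
           \<and> (\<forall>t. \<exists>y\<in>Cn n. \<psi> y = t)"
proof -
  define good where "good \<psi> \<longleftrightarrow> addv n \<psi> \<and> (\<forall>x\<in>Cn n. \<psi> (\<tau> x) = \<psi> x)" for \<psi>
  have perp: "\<exists>\<psi>. good \<psi> \<and> \<not> int p dvd \<psi> \<zeta>" if p: "Factorial_Ring.prime p" "p dvd \<delta>" for p
  proof -
    obtain q where q: "\<delta> = p * q" using p(2) by blast
    have "\<not> p dvd q"
    proof
      assume "p dvd q"
      then have "p^2 dvd \<delta>" using q by (auto simp: power2_eq_square)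
      then have "is_unit p" using \<delta>(2) by (simp add: squarefree_def)
      then show False using p(1) by simp
    qed
    then interpret plsetup n \<tau> \<delta> p q \<zeta>
      using lin \<tau>\<delta> q p(1) \<zeta> hyp[OF p(1) q] by (unfold_locales) (auto simp: linop_def)
    show ?thesis using PL by (auto simp: good_def addv_def)
  qed
  define E where "E = (\<lambda>\<psi>. \<psi> \<zeta>) ` {\<psi>. good \<psi>}"
  have Ecl: "x - y \<in> E" if xy: "x \<in> E" "y \<in> E" for x y
  proof -
    obtain \<psi>1 \<psi>2 where "good \<psi>1" "good \<psi>2" "x = \<psi>1 \<zeta>" "y = \<psi>2 \<zeta>" using xy unfolding E_def by blast
    then have "good (\<lambda>v. \<psi>1 v - \<psi>2 v)" by (auto simp: good_def addv_def)
    then show ?thesis using \<open>x = _\<close> \<open>y = _\<close> by (auto simp: E_def)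
  qed
  obtain x0 where x0: "x0 \<in> E" "x0 \<noteq> 0"
  proof (cases "\<delta> = 1")
    case True then show ?thesis using nz that by (auto simp: E_def good_def)
  next
    case False
    then obtain p where "Factorial_Ring.prime p" "p dvd \<delta>" using \<delta>(1) prime_divisor_exists[of \<delta>] by auto
    then obtain \<psi> where "good \<psi>" "\<not> int p dvd \<psi> \<zeta>" using perp by blast
    then have "\<psi> \<zeta> \<in> E" "\<psi> \<zeta> \<noteq> 0" unfolding E_def by auto
    then show ?thesis using that by blast
  qed
  obtain d where d: "d \<in> E" "d > 0" "\<And>x. x \<in> E \<Longrightarrow> d dvd x" using int_ideal[OF Ecl x0] by blast
  obtain \<psi> where \<psi>: "good \<psi>" "\<psi> \<zeta> = d" using d(1) by (auto simp: E_def)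
  have cop: "coprime d (int \<delta>)"
  proof (rule coprime_no_prime[OF \<delta>(1)])
    fix p :: nat assume "Factorial_Ring.prime p" "p dvd \<delta>"
    then obtain \<psi>' where "good \<psi>'" "\<not> int p dvd \<psi>' \<zeta>" using perp by blast
    moreover have "d dvd \<psi>' \<zeta>" using d(3) \<open>good \<psi>'\<close> by (auto simp: E_def)
    ultimately show "\<not> int p dvd d" using dvd_trans by blast
  qed
  define S where "S = \<psi> ` Cn n"
  have Scl: "x - y \<in> S" if xy: "x \<in> S" "y \<in> S" for x y
  proof -
    obtain u v where "u \<in> Cn n" "v \<in> Cn n" "x = \<psi> u" "y = \<psi> v" using xy unfolding S_def by blast
    then show ?thesis using addv_diff[of n \<psi> u v] \<psi>(1) gclosed_diff[OF gclosed_Cn]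
      by (auto simp: S_def good_def image_iff) (metis)
  qed
  have dS: "d \<in> S" "d \<noteq> 0" using \<psi>(2) \<zeta>(1) d(2) by (auto simp: S_def)
  obtain D where D: "D \<in> S" "D > 0" "\<And>x. x \<in> S \<Longrightarrow> D dvd x" using int_ideal[OF Scl dS] by blast
  obtain y0 where y0: "y0 \<in> Cn n" "\<psi> y0 = D" using D(1) by (auto simp: S_def)
  define \<psi>1 where "\<psi>1 x = \<psi> x div D" for x
  have Ddv: "D dvd \<psi> x" if "x \<in> Cn n" for x using D(3) that by (auto simp: S_def)
  have a1: "addv n \<psi>1" unfolding addv_def \<psi>1_def
  proof (intro ballI)
    fix x y assume "x \<in> Cn n" "y \<in> Cn n"
    then show "\<psi> (x + y) div D = \<psi> x div D + \<psi> y div D"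
      using \<psi>(1) Ddv by (simp add: good_def addv_def div_plus_div_distrib_dvd_left)
  qed
  have i1: "\<forall>x\<in>Cn n. \<psi>1 (\<tau> x) = \<psi>1 x" using \<psi>(1) by (simp add: good_def \<psi>1_def)
  have dD: "d = D * (d div D)" using Ddv[OF \<zeta>(1)] \<psi>(2) by simp
  have c1: "coprime (\<psi>1 \<zeta>) (int \<delta>)" using cop dD \<psi>(2) unfolding \<psi>1_def
    by (metis coprime_mult_left_iff)
  have "D \<le> d" using Ddv[OF \<zeta>(1)] \<psi>(2) d(2) by (simp add: zdvd_imp_le)
  then have p1: "\<psi>1 \<zeta> > 0" by (simp add: \<psi>1_def \<psi>(2) pos_imp_zdiv_pos_iff[OF D(2)])
  have "\<psi>1 y0 = 1" using y0 D(2) by (simp add: \<psi>1_def)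
  then have s1: "\<forall>t. \<exists>y\<in>Cn n. \<psi>1 y = t"
    using addv_cmul[OF a1 y0(1)] gclosed_cmul[OF gclosed_Cn y0(1)] by (metis mult.right_neutral)
  show ?thesis using a1 i1 c1 p1 s1 by blast
qed

lemma rank_ker:
  assumes a: "addv n \<psi>" and z: "\<zeta> \<in> Cn n" "\<psi> \<zeta> = 1"
  shows "gclosed {y\<in>Cn n. \<psi> y = 0}"
    and "subgroup_generated (free_Abelian_group {..<n}) {y\<in>Cn n. \<psi> y = 0} \<cong> free_Abelian_group {..<n-1}"
proof -
  define K where "K = {y\<in>Cn n. \<psi> y = 0}"
  show Kcl: "gclosed {y\<in>Cn n. \<psi> y = 0}"
    using addv_zero[OF a] addv_diff[OF a] gclosed_Cn[of n]
    by (auto simp: gclosed_def)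
  have Ksub: "K \<subseteq> {x. Poly_Mapping.keys x \<subseteq> {..<n}}" by (auto simp: K_def Cn_def)
  obtain b r where b: "is_basis K b r" using lattice_basis[OF Ksub Kcl[folded K_def]] by blast
  define b' where "b' = b(r := \<zeta>)"
  have eq: "lc b' (Suc r) a = lc b r a + frag_cmul (a r) \<zeta>" for a
    by (simp add: lc_Suc b'_def) (rule lc_cong, auto)
  have bK: "\<And>i. i < r \<Longrightarrow> b i \<in> K" using b by (simp add: is_basis_def)
  have lcK: "lc b r a \<in> K" for a by (rule lc_in[OF Kcl[folded K_def] bK])
  have "is_basis (Cn n) b' (Suc r)"
    unfolding is_basis_def
  proof (intro conjI allI impI ballI)
    fix i assume "i < Suc r" then show "b' i \<in> Cn n" using bK z by (auto simp: b'_def K_def less_Suc_eq)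
  next
    fix y assume y: "y \<in> Cn n"
    have yc: "y - frag_cmul (\<psi> y) \<zeta> \<in> Cn n" by (rule gclosed_diff[OF gclosed_Cn y gclosed_cmul[OF gclosed_Cn z(1)]])
    have "\<psi> (y - frag_cmul (\<psi> y) \<zeta>) = 0"
      using addv_diff[OF a y gclosed_cmul[OF gclosed_Cn z(1)]] addv_cmul[OF a z(1)] z(2) by simp
    then have "y - frag_cmul (\<psi> y) \<zeta> \<in> K" using yc by (simp add: K_def)
    then obtain a' where "y - frag_cmul (\<psi> y) \<zeta> = lc b r a'" using b by (auto simp: is_basis_def)
    then have "y = lc b' (Suc r) (a'(r := \<psi> y))"
      using eq[of "a'(r := \<psi> y)"] lc_cong[of r "a'(r := \<psi> y)" a' b b] by (simp add: algebra_simps)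
    then show "\<exists>a. y = lc b' (Suc r) a" by blast
  next
    fix a' i assume z0: "lc b' (Suc r) a' = 0" and i: "i < Suc r"
    have l: "lc b r a' \<in> Cn n" "\<psi> (lc b r a') = 0" using lcK by (auto simp: K_def)
    have "\<psi> (lc b r a' + frag_cmul (a' r) \<zeta>) = \<psi> (lc b r a') + \<psi> (frag_cmul (a' r) \<zeta>)"
      using a l(1) gclosed_cmul[OF gclosed_Cn z(1)] by (simp add: addv_def)
    then have "a' r = 0" using z0 eq l(2) addv_cmul[OF a z(1)] z(2) addv_zero[OF a] by simp
    then have "lc b r a' = 0" using z0 eq by simp
    then have "\<forall>j<r. a' j = 0" using b by (auto simp: is_basis_def)
    then show "a' i = 0" using \<open>a' r = 0\<close> i by (auto simp: less_Suc_eq)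
  qed
  moreover have "Cn n \<subseteq> {x. Poly_Mapping.keys x \<subseteq> {..<n}}" by (simp add: Cn_def)
  ultimately have "subgroup_generated (free_Abelian_group {..<n}) (Cn n) \<cong> free_Abelian_group {..<Suc r}"
    using basis_iso gclosed_Cn by blast
  moreover have "Cn n = carrier (free_Abelian_group {..<n})" by (auto simp: Cn_def)
  ultimately have "free_Abelian_group {..<n} \<cong> free_Abelian_group {..<Suc r}"
    by (simp add: group.subgroup_generated_group_carrier)
  then have "{..<n} \<approx> {..<Suc r}" by (simp add: isomorphic_free_Abelian_groups)
  then have "n = Suc r" by (simp add: eqpoll_iff_card)
  then show "subgroup_generated (free_Abelian_group {..<n}) {y\<in>Cn n. \<psi> y = 0} \<cong> free_Abelian_group {..<n-1}"
    using basis_iso[OF b Kcl[folded K_def] Ksub] by (simp add: K_def)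
qed

locale bsetup = group G for G :: "('a, 'b) monoid_scheme" (structure) +
  fixes M :: "'a set" and f :: "'a \<Rightarrow> vec" and c :: 'a and \<delta> :: nat and n :: nat
  assumes Mnorm: "M \<lhd> G"
    and Mab: "\<And>x y. x \<in> M \<Longrightarrow> y \<in> M \<Longrightarrow> x \<otimes> y = y \<otimes> x"
    and fiso: "f \<in> iso (subgroup_generated G M) (free_Abelian_group {..<n})"
    and cG: "c \<in> carrier G"
    and rep: "\<And>g. g \<in> carrier G \<Longrightarrow> \<exists>m\<in>M. \<exists>k::int. g = m \<otimes> c [^] k"
    and cpow: "\<And>k::int. c [^] k \<in> M \<longleftrightarrow> int \<delta> dvd k"
    and \<delta>pos: "\<delta> > 0"
    and tf: "torsion_free G"
    and pow\<delta>: "\<And>x. x \<in> carrier G \<Longrightarrow> x [^] \<delta> \<in> M"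
    and c1: "\<delta> = 1 \<Longrightarrow> c \<noteq> \<one>"
    and sqf: "squarefree \<delta>"
begin

lemma Msg: "subgroup M G" using Mnorm by (simp add: normal_imp_subgroup)

lemma MG: "x \<in> M \<Longrightarrow> x \<in> carrier G" using Msg subgroup.subset by blast

lemma carM: "carrier (subgroup_generated G M) = M"
  using subgroup.carrier_subgroup_generated_subgroup[OF Msg] .

lemma carF: "carrier (free_Abelian_group {..<n}) = Cn n" by (auto simp: Cn_def)

lemma multsg: "x \<otimes>\<^bsub>subgroup_generated G M\<^esub> y = x \<otimes> y"
  by (simp add: subgroup_generated_def)

lemma fhom: "x \<in> M \<Longrightarrow> y \<in> M \<Longrightarrow> f (x \<otimes> y) = f x + f y"
proof -
  assume xy: "x \<in> M" "y \<in> M"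
  have "f \<in> hom (subgroup_generated G M) (free_Abelian_group {..<n})" using fiso by (simp add: iso_def)
  then have "\<forall>a\<in>M. \<forall>b\<in>M. f (a \<otimes>\<^bsub>subgroup_generated G M\<^esub> b) = f a \<otimes>\<^bsub>free_Abelian_group {..<n}\<^esub> f b"
    unfolding hom_def carM by blast
  then show ?thesis using xy by (simp add: multsg)
qed

lemma fbij: "bij_betw f M (Cn n)"
  using fiso unfolding iso_def by (simp add: carM carF)

lemma fC: "x \<in> M \<Longrightarrow> f x \<in> Cn n"
  using fbij bij_betwE by blast

lemma finj: "x \<in> M \<Longrightarrow> y \<in> M \<Longrightarrow> f x = f y \<Longrightarrow> x = y"
  using fbij by (meson bij_betw_def inj_onD)

lemma M1: "\<one> \<in> M" by (rule subgroup.one_closed[OF Msg])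
lemma Mmul: "x \<in> M \<Longrightarrow> y \<in> M \<Longrightarrow> x \<otimes> y \<in> M" by (rule subgroup.m_closed[OF Msg])
lemma Minv: "x \<in> M \<Longrightarrow> inv x \<in> M" by (rule subgroup.m_inv_closed[OF Msg])

lemma f1: "f \<one> = 0"
proof -
  have "f (\<one> \<otimes> \<one>) = f \<one> + f \<one>" using fhom M1 by blast
  then have "f \<one> = f \<one> + f \<one>" by (simp only: one_closed l_one)
  then show ?thesis by (metis add_cancel_right_right)
qed

lemma finv: "x \<in> M \<Longrightarrow> f (inv x) = - f x"
proof -
  assume x: "x \<in> M"
  have "f (x \<otimes> inv x) = f x + f (inv x)" using fhom x Minv by blast
  then have "f x + f (inv x) = 0" using r_inv[OF MG[OF x]] f1 by metis
  then show ?thesis by (metis add.commute eq_neg_iff_add_eq_0)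
qed

definition gi where "gi y = the_inv_into M f y"

lemma gi: "y \<in> Cn n \<Longrightarrow> gi y \<in> M \<and> f (gi y) = y"
proof -
  assume y: "y \<in> Cn n"
  have inj: "inj_on f M" and im: "f ` M = Cn n" using fbij by (simp_all add: bij_betw_def)
  have yi: "y \<in> f ` M" using y im by simp
  show ?thesis unfolding gi_def
    using the_inv_into_into[OF inj yi subset_refl] f_the_inv_into_f[OF inj yi] by simp
qed

lemma gi_f: "x \<in> M \<Longrightarrow> gi (f x) = x"
proof -
  assume x: "x \<in> M"
  have a: "gi (f x) \<in> M" "f (gi (f x)) = f x" using gi[OF fC[OF x]] by auto
  show ?thesis by (rule finj[OF a(1) x a(2)])
qed

definition cj :: "int \<Rightarrow> 'a \<Rightarrow> 'a" where "cj k x = c [^] k \<otimes> x \<otimes> inv (c [^] k)"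

lemma cjM: "x \<in> M \<Longrightarrow> cj k x \<in> M"
  unfolding cj_def by (rule normal.inv_op_closed2[OF Mnorm int_pow_closed[OF cG]])

lemma invl: "a \<in> carrier G \<Longrightarrow> b \<in> carrier G \<Longrightarrow> inv a \<otimes> (a \<otimes> b) = b"
proof -
  assume a: "a \<in> carrier G" and b: "b \<in> carrier G"
  have "inv a \<otimes> (a \<otimes> b) = (inv a \<otimes> a) \<otimes> b" using a b by (intro m_assoc[symmetric]) simp_all
  also have "\<dots> = b" using a b by (simp only: l_inv l_one)
  finally show ?thesis .
qed

lemma cj_mul: "x \<in> carrier G \<Longrightarrow> y \<in> carrier G \<Longrightarrow> cj k (x \<otimes> y) = cj k x \<otimes> cj k y"
proof -
  assume x: "x \<in> carrier G" and y: "y \<in> carrier G"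
  define a where "a = c [^] k"
  have a: "a \<in> carrier G" "inv a \<in> carrier G" using cG by (simp_all add: a_def)
  have "cj k x \<otimes> cj k y = a \<otimes> x \<otimes> (inv a \<otimes> (a \<otimes> (y \<otimes> inv a)))"
    unfolding cj_def a_def[symmetric] using a x y by (simp only: m_assoc m_closed)
  also have "\<dots> = a \<otimes> x \<otimes> (y \<otimes> inv a)" using a x y by (simp only: invl m_closed)
  also have "\<dots> = cj k (x \<otimes> y)" unfolding cj_def a_def[symmetric] using a x y by (simp only: m_assoc m_closed)
  finally show ?thesis by simp
qed

lemma cj_add: "x \<in> carrier G \<Longrightarrow> cj a (cj b x) = cj (a + b) x"
proof -
  assume x: "x \<in> carrier G"
  have ca: "c [^] a \<in> carrier G" and cb: "c [^] b \<in> carrier G" using cG by simp_all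
  have e1: "c [^] (a + b) = c [^] a \<otimes> c [^] b" using cG by (rule int_pow_mult)
  have e2: "inv (c [^] a \<otimes> c [^] b) = inv (c [^] b) \<otimes> inv (c [^] a)"
    using ca cb by (rule inv_mult_group)
  show ?thesis unfolding cj_def e1 e2 using ca cb x by (simp add: m_assoc)
qed

lemma cj_0: "x \<in> carrier G \<Longrightarrow> cj 0 x = x"
  unfolding cj_def by simp

definition \<tau> where "\<tau> y = f (cj 1 (gi y))"

lemma lin: "linop n \<tau>"
proof
  fix x y assume x: "x \<in> Cn n" and y: "y \<in> Cn n"
  show "\<tau> x \<in> Cn n" unfolding \<tau>_def using gi[OF x] cjM fC by blast
  have gx: "gi x \<in> M" "f (gi x) = x" using gi[OF x] by auto
  have gy: "gi y \<in> M" "f (gi y) = y" using gi[OF y] by auto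
  have "f (gi x \<otimes> gi y) = x + y" using fhom[OF gx(1) gy(1)] gx(2) gy(2) by simp
  then have "gi (x + y) = gi (f (gi x \<otimes> gi y))" by simp
  also have "\<dots> = gi x \<otimes> gi y" by (rule gi_f[OF Mmul[OF gx(1) gy(1)]])
  finally have "gi (x + y) = gi x \<otimes> gi y" .
  then show "\<tau> (x + y) = \<tau> x + \<tau> y"
    unfolding \<tau>_def using gi[OF x] gi[OF y] MG cj_mul fhom cjM by simp
qed

lemma tau_pow: "y \<in> Cn n \<Longrightarrow> (\<tau>^^j) y = f (cj (int j) (gi y))"
proof (induction j)
  case 0 then show ?case using gi MG cj_0 by simp
next
  case (Suc j)
  have "(\<tau>^^Suc j) y = \<tau> (f (cj (int j) (gi y)))" using Suc by simp
  also have "\<dots> = f (cj 1 (cj (int j) (gi y)))"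
    unfolding \<tau>_def using gi_f cjM gi[OF Suc.prems] by simp
  also have "\<dots> = f (cj (int (Suc j)) (gi y))"
    using cj_add gi[OF Suc.prems] MG by (simp add: add.commute)
  finally show ?case .
qed

lemma cpow_mem: "c [^] (int \<delta>) \<in> M" using cpow by simp

lemma cj_\<delta>: "x \<in> M \<Longrightarrow> cj (int \<delta>) x = x"
proof -
  assume x: "x \<in> M"
  have cc: "c [^] (int \<delta>) \<in> carrier G" using cG by simp
  have "c [^] (int \<delta>) \<otimes> x = x \<otimes> c [^] (int \<delta>)" using Mab[OF cpow_mem x] .
  then show ?thesis unfolding cj_def using cc MG[OF x] by (simp add: m_assoc)
qed

lemma tau_\<delta>: "y \<in> Cn n \<Longrightarrow> (\<tau>^^\<delta>) y = y"
  using tau_pow cj_\<delta> gi by simp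

definition z where "z = c [^] \<delta>"
definition \<zeta> where "\<zeta> = f z"

lemma zM: "z \<in> M" using cpow_mem by (simp add: z_def int_pow_int)

lemma \<zeta>C: "\<zeta> \<in> Cn n" using zM fC by (simp add: \<zeta>_def)

lemma cj_z: "cj k z = z"
proof -
  have ck: "c [^] k \<in> carrier G" and cd: "c [^] \<delta> \<in> carrier G" using cG by simp_all
  have "c [^] k \<otimes> c [^] (int \<delta>) = c [^] (int \<delta>) \<otimes> c [^] k"
    using int_pow_mult[OF cG, of k "int \<delta>"] int_pow_mult[OF cG, of "int \<delta>" k] by (simp add: add.commute)
  then have "c [^] k \<otimes> c [^] \<delta> = c [^] \<delta> \<otimes> c [^] k" by (simp add: int_pow_int)
  then show ?thesis unfolding cj_def z_def using ck cd by (simp add: m_assoc)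
qed

lemma \<tau>\<zeta>: "\<tau> \<zeta> = \<zeta>"
  unfolding \<tau>_def \<zeta>_def using gi_f zM cj_z by simp

end

context bsetup begin

lemma invr: "a \<in> carrier G \<Longrightarrow> b \<in> carrier G \<Longrightarrow> a \<otimes> (inv a \<otimes> b) = b"
proof -
  assume a: "a \<in> carrier G" and b: "b \<in> carrier G"
  have "a \<otimes> (inv a \<otimes> b) = (a \<otimes> inv a) \<otimes> b" using a b by (intro m_assoc[symmetric]) simp_all
  also have "\<dots> = b" using a b by (simp only: r_inv l_one)
  finally show ?thesis .
qed

lemma cj_f: "m \<in> M \<Longrightarrow> (\<tau>^^j) (f m) = f (cj (int j) m)"
  using tau_pow[OF fC] gi_f by simp

lemma A_formula:
  fixes q :: nat
  assumes m: "m \<in> M"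
  defines "w \<equiv> c [^] (int q)"
  shows "(m \<otimes> w) [^] j \<otimes> inv (w [^] j) \<in> M \<and>
         f ((m \<otimes> w) [^] j \<otimes> inv (w [^] j)) = (\<Sum>i<j. (\<tau>^^(q*i)) (f m))"
proof (induction j)
  case 0
  then show ?case using M1 f1 by simp
next
  case (Suc j)
  have wG: "w \<in> carrier G" unfolding w_def using cG by simp
  have mG: "m \<in> carrier G" using MG[OF m] .
  define P where "P = (m \<otimes> w) [^] j"
  define W where "W = w [^] j"
  have PG: "P \<in> carrier G" and WG: "W \<in> carrier G" using mG wG by (simp_all add: P_def W_def)
  have Wc: "W = c [^] (int (q * j))"
    unfolding W_def w_def using int_pow_pow[OF cG, of "int q" "int j"] by (simp add: int_pow_int)
  have B: "W \<otimes> m \<otimes> inv W = cj (int (q*j)) m" unfolding cj_def Wc ..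
  have "(m \<otimes> w) [^] Suc j \<otimes> inv (w [^] Suc j) = P \<otimes> (m \<otimes> w) \<otimes> inv (W \<otimes> w)"
    by (simp add: P_def W_def)
  also have "\<dots> = P \<otimes> (m \<otimes> (w \<otimes> (inv w \<otimes> inv W)))"
    using PG WG mG wG by (simp add: m_assoc inv_mult_group)
  also have "\<dots> = P \<otimes> (m \<otimes> inv W)" using wG WG by (simp only: invr inv_closed)
  also have "\<dots> = P \<otimes> (inv W \<otimes> (W \<otimes> (m \<otimes> inv W)))" using WG mG by (simp only: invl inv_closed m_closed)
  also have "\<dots> = (P \<otimes> inv W) \<otimes> (W \<otimes> m \<otimes> inv W)" using PG WG mG by (simp add: m_assoc)
  finally have e: "(m \<otimes> w) [^] Suc j \<otimes> inv (w [^] Suc j) = (P \<otimes> inv W) \<otimes> cj (int (q*j)) m"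
    using B by simp
  have IH1: "P \<otimes> inv W \<in> M" and IH2: "f (P \<otimes> inv W) = (\<Sum>i<j. (\<tau>^^(q*i)) (f m))"
    using Suc.IH by (simp_all add: P_def W_def)
  have cjm: "cj (int (q*j)) m \<in> M" using cjM[OF m] .
  show ?case
  proof
    show "(m \<otimes> w) [^] Suc j \<otimes> inv (w [^] Suc j) \<in> M" unfolding e using Mmul[OF IH1 cjm] .
    have "f ((m \<otimes> w) [^] Suc j \<otimes> inv (w [^] Suc j)) = f (P \<otimes> inv W) + f (cj (int (q*j)) m)"
      unfolding e by (rule fhom[OF IH1 cjm])
    also have "\<dots> = (\<Sum>i<Suc j. (\<tau>^^(q*i)) (f m))" using IH2 cj_f[OF m, of "q*j"] by simp
    finally show "f ((m \<otimes> w) [^] Suc j \<otimes> inv (w [^] Suc j)) = (\<Sum>i<Suc j. (\<tau>^^(q*i)) (f m))" .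
  qed
qed

lemma hyp:
  assumes p: "Factorial_Ring.prime p" and pq: "\<delta> = p * q" and y: "y \<in> Cn n"
  shows "(\<Sum>i<p. (\<tau>^^(q*i)) y) \<noteq> \<zeta>"
proof
  assume eq: "(\<Sum>i<p. (\<tau>^^(q*i)) y) = \<zeta>"
  have ny: "- y \<in> Cn n" using gclosed_neg[OF gclosed_Cn y] .
  define m where "m = gi (- y)"
  have m: "m \<in> M" "f m = - y" using gi[OF ny] by (auto simp: m_def)
  define w where "w = c [^] (int q)"
  have wG: "w \<in> carrier G" unfolding w_def using cG by simp
  have mG: "m \<in> carrier G" using MG[OF m(1)] .
  have neg: "(\<tau>^^j) (- y) = - (\<tau>^^j) y" for j
    using linop.pw_diff[OF lin gclosed_zero[OF gclosed_Cn] y, of j] linop.pw_zero[OF lin, of j] by simp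
  have A: "(m \<otimes> w) [^] p \<otimes> inv (w [^] p) \<in> M"
     "f ((m \<otimes> w) [^] p \<otimes> inv (w [^] p)) = (\<Sum>i<p. (\<tau>^^(q*i)) (f m))"
    using A_formula[OF m(1), of q p] by (simp_all add: w_def)
  have "(\<Sum>i<p. (\<tau>^^(q*i)) (f m)) = - \<zeta>"
    unfolding m(2) neg using eq by (simp add: sum_negf)
  then have fA: "f ((m \<otimes> w) [^] p \<otimes> inv (w [^] p)) = - \<zeta>" using A(2) by simp
  have "w [^] p = c [^] (int q * int p)"
    unfolding w_def using int_pow_pow[OF cG, of "int q" "int p"] by (simp add: int_pow_int)
  also have "\<dots> = c [^] (int \<delta>)" using pq by (simp add: mult.commute)
  finally have wp: "w [^] p = z" unfolding z_def by (simp add: int_pow_int)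
  have Pe: "(m \<otimes> w) [^] p = ((m \<otimes> w) [^] p \<otimes> inv (w [^] p)) \<otimes> z"
    using mG wG wp MG[OF zM] by (simp add: m_assoc)
  have PM: "(m \<otimes> w) [^] p \<in> M" using Pe Mmul[OF A(1) zM] by simp
  have "f ((m \<otimes> w) [^] p) = - \<zeta> + \<zeta>" using Pe fhom[OF A(1) zM] fA by (simp add: \<zeta>_def)
  then have "f ((m \<otimes> w) [^] p) = f \<one>" using f1 by simp
  then have P1: "(m \<otimes> w) [^] p = \<one>" using finj[OF PM M1] by simp
  have p0: "p > 0" using p by (simp add: prime_gt_0_nat)
  have mw: "m \<otimes> w \<in> carrier G" using mG wG by simp
  have tf': "x \<in> carrier G \<Longrightarrow> k > 0 \<Longrightarrow> x [^] k = \<one> \<Longrightarrow> x = \<one>" for x and k :: nat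
    using tf unfolding torsion_free_def by auto
  have mw1: "m \<otimes> w = \<one>" by (rule tf'[OF mw p0 P1])
  have "w = inv m \<otimes> (m \<otimes> w)" using invl[OF mG wG] by simp
  also have "\<dots> = inv m" using mw1 mG by simp
  finally have "w \<in> M" using Minv[OF m(1)] by simp
  then have "int \<delta> dvd int q" using cpow unfolding w_def by simp
  then have "p * q dvd q" using pq by simp
  moreover have qp: "q > 0" using \<delta>pos pq by simp
  ultimately have "p * q \<le> 1 * q" using dvd_imp_le by simp
  then have "p \<le> 1" using qp by (simp only: mult_le_cancel2)
  then show False using prime_ge_2_nat[OF p] by simp
qed

lemma exists_psi:
  "\<exists>\<psi>. addv n \<psi> \<and> (\<forall>x\<in>Cn n. \<psi> (\<tau> x) = \<psi> x) \<and> coprime (\<psi> \<zeta>) (int \<delta>) \<and> \<psi> \<zeta> > 0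
           \<and> (\<forall>t. \<exists>y\<in>Cn n. \<psi> y = t)"
proof (rule PL2[OF lin tau_\<delta> \<delta>pos sqf \<zeta>C \<tau>\<zeta> hyp])
  assume d1: "\<delta> = 1"
  have "z \<noteq> \<one>" unfolding z_def using c1[OF d1] cG by (simp add: d1)
  then have "\<zeta> \<noteq> 0" using finj[OF zM M1] f1 by (auto simp: \<zeta>_def)
  then obtain i where i: "Poly_Mapping.lookup \<zeta> i \<noteq> 0"
  proof -
    assume th: "\<And>i. Poly_Mapping.lookup \<zeta> i \<noteq> 0 \<Longrightarrow> thesis"
    show thesis
    proof (rule ccontr)
      assume "\<not> thesis"
      then have "\<And>i. Poly_Mapping.lookup \<zeta> i = Poly_Mapping.lookup 0 i" using th by auto
      then have "\<zeta> = 0" by (rule poly_mapping_eqI)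
      then show False using \<open>\<zeta> \<noteq> 0\<close> by simp
    qed
  qed
  have t1: "\<tau> x = x" if "x \<in> Cn n" for x using tau_\<delta>[OF that] d1 by simp
  show "\<exists>\<psi>. addv n \<psi> \<and> (\<forall>x\<in>Cn n. \<psi> (\<tau> x) = \<psi> x) \<and> \<psi> \<zeta> \<noteq> 0"
    by (rule exI[of _ "\<lambda>v. Poly_Mapping.lookup v i"]) (simp add: addv_def lookup_add t1 i)
qed

end

context bsetup begin

definition psi where "psi = (SOME \<psi>. addv n \<psi> \<and> (\<forall>x\<in>Cn n. \<psi> (\<tau> x) = \<psi> x) \<and> coprime (\<psi> \<zeta>) (int \<delta>) \<and> \<psi> \<zeta> > 0
           \<and> (\<forall>t. \<exists>y\<in>Cn n. \<psi> y = t))"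

lemma psi: "addv n psi \<and> (\<forall>x\<in>Cn n. psi (\<tau> x) = psi x) \<and> coprime (psi \<zeta>) (int \<delta>) \<and> psi \<zeta> > 0
           \<and> (\<forall>t. \<exists>y\<in>Cn n. psi y = t)"
  unfolding psi_def by (rule someI_ex[OF exists_psi])

lemma psi_add: "addv n psi" using psi by simp
lemma psi_inv: "x \<in> Cn n \<Longrightarrow> psi (\<tau> x) = psi x" using psi by simp
lemma psi_surj: "\<exists>y\<in>Cn n. psi y = t" using psi by simp

definition Psi where "Psi m = psi (f m)"
definition e where "e = psi \<zeta>"

lemma e_cop: "coprime e (int \<delta>)" using psi by (simp add: e_def)

lemma Psi_mul: "x \<in> M \<Longrightarrow> y \<in> M \<Longrightarrow> Psi (x \<otimes> y) = Psi x + Psi y"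
  unfolding Psi_def using fhom fC psi by (simp add: addv_def)

lemma Psi_1: "Psi \<one> = 0"
  unfolding Psi_def f1 by (rule addv_zero[OF psi_add])

lemma Psi_inv: "x \<in> M \<Longrightarrow> Psi (inv x) = - Psi x"
proof -
  assume x: "x \<in> M"
  have "Psi (x \<otimes> inv x) = Psi x + Psi (inv x)" using Psi_mul[OF x Minv[OF x]] .
  moreover have "x \<otimes> inv x = \<one>" using MG[OF x] by simp
  ultimately show ?thesis using Psi_1 by simp
qed

lemma Psi_cj1: "m \<in> M \<Longrightarrow> Psi (cj 1 m) = Psi m"
proof -
  assume m: "m \<in> M"
  have "\<tau> (f m) = f (cj 1 m)" unfolding \<tau>_def using gi_f[OF m] by simp
  moreover have "psi (\<tau> (f m)) = psi (f m)" by (rule psi_inv[OF fC[OF m]])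
  ultimately show ?thesis unfolding Psi_def by simp
qed

lemma Psi_cj: "m \<in> M \<Longrightarrow> Psi (cj k m) = Psi m"
proof (induction k arbitrary: m rule: int_induct[where k = 0])
  case base
  then show ?case using cj_0 MG by simp
next
  case (step1 i)
  have "cj (i + 1) m = cj 1 (cj i m)" using cj_add[OF MG[OF step1.prems]] by (simp add: add.commute)
  then show ?case using Psi_cj1[OF cjM[OF step1.prems]] step1.IH[OF step1.prems] by simp
next
  case (step2 i)
  have "cj i m = cj 1 (cj (i - 1) m)" using cj_add[OF MG[OF step2.prems]] by simp
  then show ?case using Psi_cj1[OF cjM[OF step2.prems]] step2.IH[OF step2.prems] by simp
qed

lemma Mpow: "x \<in> M \<Longrightarrow> x [^] (k::nat) \<in> M"
  by (induction k) (simp_all add: M1 Mmul)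

lemma Psi_pow_nat: "x \<in> M \<Longrightarrow> Psi (x [^] (k::nat)) = int k * Psi x"
proof (induction k)
  case 0 then show ?case using Psi_1 by simp
next
  case (Suc k)
  have "x [^] Suc k = x [^] k \<otimes> x" by simp
  moreover have "x [^] k \<in> M" by (rule Mpow[OF Suc.prems])
  ultimately show ?case using Psi_mul Suc by (simp add: distrib_right)
qed

lemma Psi_pow: "x \<in> M \<Longrightarrow> Psi (x [^] (k::int)) = k * Psi x"
proof -
  assume x: "x \<in> M"
  show ?thesis
  proof (cases "k \<ge> 0")
    case True
    then have kk: "k = int (nat k)" by simp
    have "x [^] k = x [^] (int (nat k))" using kk by simp
    also have "\<dots> = x [^] (nat k)" by (rule int_pow_int)
    finally show ?thesis using Psi_pow_nat[OF x, of "nat k"] kk by simp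
  next
    case False
    then have kk: "k = - int (nat (-k))" by simp
    have "x [^] k = x [^] (- int (nat (-k)))" using kk by simp
    also have "\<dots> = inv (x [^] (nat (-k)))" by (rule int_pow_neg_int[OF MG[OF x]])
    finally have e1: "x [^] k = inv (x [^] (nat (-k)))" .
    have "Psi (inv (x [^] (nat (-k)))) = - Psi (x [^] (nat (-k)))" by (rule Psi_inv[OF Mpow[OF x]])
    then show ?thesis using e1 Psi_pow_nat[OF x, of "nat (-k)"] kk by simp
  qed
qed

lemma Psi_z: "Psi z = e" by (simp add: Psi_def e_def \<zeta>_def)

lemma swap: "a \<in> carrier G \<Longrightarrow> b \<in> carrier G \<Longrightarrow> a' \<in> carrier G \<Longrightarrow> b' \<in> carrier G \<Longrightarrow>
   a \<otimes> b = a' \<otimes> b' \<Longrightarrow> inv a' \<otimes> a = b' \<otimes> inv b"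
proof -
  assume a: "a \<in> carrier G" and b: "b \<in> carrier G" and a': "a' \<in> carrier G" and b': "b' \<in> carrier G"
    and eq: "a \<otimes> b = a' \<otimes> b'"
  have "inv a' \<otimes> a = inv a' \<otimes> (a \<otimes> b) \<otimes> inv b" using a b a' by (simp add: m_assoc)
  also have "\<dots> = inv a' \<otimes> (a' \<otimes> b') \<otimes> inv b" using eq by simp
  also have "\<dots> = b' \<otimes> inv b" using a' b' b by (simp add: m_assoc[symmetric])
  finally show ?thesis .
qed

lemma wd:
  assumes m: "m \<in> M" and m': "m' \<in> M" and eq: "m \<otimes> c [^] k = m' \<otimes> c [^] k'"
  shows "int \<delta> * Psi m + k * e = int \<delta> * Psi m' + k' * e"
proof -
  have "inv m' \<otimes> m = c [^] k' \<otimes> inv (c [^] k)"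
    by (rule swap[OF MG[OF m] _ MG[OF m'] _ eq]) (use cG in simp_all)
  also have "\<dots> = c [^] (k' - k)" using cG by (simp add: int_pow_diff)
  finally have e1: "inv m' \<otimes> m = c [^] (k' - k)" .
  then have "c [^] (k' - k) \<in> M" using Mmul[OF Minv[OF m'] m] by simp
  then have "int \<delta> dvd (k' - k)" using cpow by simp
  then obtain t where t: "k' - k = int \<delta> * t" by (elim dvdE)
  have "c [^] (k' - k) = (c [^] (int \<delta>)) [^] t" using t int_pow_pow[OF cG] by simp
  also have "\<dots> = z [^] t" by (simp add: z_def int_pow_int)
  finally have "inv m' \<otimes> m = z [^] t" using e1 by simp
  then have "Psi m - Psi m' = t * e"
    using Psi_mul[OF Minv[OF m'] m] Psi_inv[OF m'] Psi_pow[OF zM, of t] Psi_z by simp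
  then have "int \<delta> * (Psi m - Psi m') = (k' - k) * e" using t by simp
  then show ?thesis by (simp add: algebra_simps)
qed

definition phi where
  "phi x = (SOME v. \<exists>m\<in>M. \<exists>k::int. x = m \<otimes> c [^] k \<and> v = int \<delta> * Psi m + k * e)"

lemma phi_rep: "m \<in> M \<Longrightarrow> x = m \<otimes> c [^] k \<Longrightarrow> phi x = int \<delta> * Psi m + k * e"
proof -
  assume m: "m \<in> M" and x: "x = m \<otimes> c [^] k"
  have ex: "\<exists>v. \<exists>m\<in>M. \<exists>k::int. x = m \<otimes> c [^] k \<and> v = int \<delta> * Psi m + k * e"
    by (rule exI[where x="int \<delta> * Psi m + k * e"], rule bexI[OF _ m], rule exI[where x=k]) (simp add: x)
  have "\<exists>m'\<in>M. \<exists>k'::int. x = m' \<otimes> c [^] k' \<and> phi x = int \<delta> * Psi m' + k' * e"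
    unfolding phi_def by (rule someI_ex[OF ex])
  then obtain m' k' where m': "m' \<in> M" "x = m' \<otimes> c [^] k'" "phi x = int \<delta> * Psi m' + k' * e"
    by auto
  show ?thesis using wd[OF m' (1) m] m'(2,3) x by simp
qed

lemma phi_M: "m \<in> M \<Longrightarrow> phi m = int \<delta> * Psi m"
  using phi_rep[of m m 0] MG by simp

lemma phi_c: "phi c = e"
  using phi_rep[OF M1, of c 1] cG Psi_1 by simp

lemma phi_mul: "x \<in> carrier G \<Longrightarrow> y \<in> carrier G \<Longrightarrow> phi (x \<otimes> y) = phi x + phi y"
proof -
  assume x: "x \<in> carrier G" and y: "y \<in> carrier G"
  obtain m and a :: int where m: "m \<in> M" "x = m \<otimes> c [^] a" using rep[OF x] by blast
  obtain m' and b :: int where m': "m' \<in> M" "y = m' \<otimes> c [^] b" using rep[OF y] by blast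
  have mG: "m \<in> carrier G" and m'G: "m' \<in> carrier G" using MG m m' by auto
  have ca: "c [^] a \<in> carrier G" and cb: "c [^] b \<in> carrier G" using cG by simp_all
  have "x \<otimes> y = m \<otimes> (c [^] a \<otimes> (m' \<otimes> c [^] b))" using m m' mG m'G ca cb by (simp add: m_assoc)
  also have "\<dots> = m \<otimes> (c [^] a \<otimes> (m' \<otimes> (inv (c [^] a) \<otimes> (c [^] a \<otimes> c [^] b))))"
    using ca cb by (simp only: invl m_closed)
  also have "\<dots> = (m \<otimes> cj a m') \<otimes> c [^] (a + b)"
    unfolding cj_def using mG m'G ca cb cG by (simp add: m_assoc int_pow_mult)
  finally have "x \<otimes> y = (m \<otimes> cj a m') \<otimes> c [^] (a + b)" .
  then have "phi (x \<otimes> y) = int \<delta> * Psi (m \<otimes> cj a m') + (a + b) * e"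
    by (rule phi_rep[OF Mmul[OF m(1) cjM[OF m'(1)]]])
  also have "\<dots> = int \<delta> * (Psi m + Psi m') + (a + b) * e"
    using Psi_mul[OF m(1) cjM[OF m'(1)]] Psi_cj[OF m'(1)] by simp
  also have "\<dots> = phi x + phi y" using phi_rep[OF m] phi_rep[OF m'] by (simp add: algebra_simps)
  finally show ?thesis .
qed

lemma phi_hom: "phi \<in> hom G integer_group"
  by (rule homI) (simp_all add: phi_mul)

lemma phi_pow: "x \<in> carrier G \<Longrightarrow> phi (x [^] (k::int)) = k * phi x"
  using hom_int_pow[OF phi_hom] by simp

lemma phi_pow_nat: "x \<in> carrier G \<Longrightarrow> phi (x [^] (k::nat)) = int k * phi x"
  using hom_nat_pow[OF phi_hom] by simp

end

context bsetup begin

lemma phi_1: "phi \<one> = 0" using phi_M[OF M1] Psi_1 by simp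

lemma phi_inv: "x \<in> carrier G \<Longrightarrow> phi (inv x) = - phi x"
proof -
  assume x: "x \<in> carrier G"
  have "phi (x \<otimes> inv x) = phi x + phi (inv x)" by (rule phi_mul[OF x inv_closed[OF x]])
  then show ?thesis using x phi_1 by simp
qed

definition N where "N = {x \<in> carrier G. phi x = 0}"

lemma N_kernel: "N = kernel G integer_group phi"
  by (simp add: N_def kernel_def)

lemma N_normal: "N \<lhd> G"
proof -
  have "group_hom G integer_group phi"
    unfolding group_hom_def group_hom_axioms_def using phi_hom is_group by simp
  then show ?thesis unfolding N_kernel by (rule group_hom.normal_kernel)
qed

lemma N_sub: "N \<subseteq> M"
proof
  fix x assume "x \<in> N"
  then have x: "x \<in> carrier G" "phi x = 0" by (auto simp: N_def)
  obtain m and k :: int where m: "m \<in> M" "x = m \<otimes> c [^] k" using rep[OF x(1)] by blast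
  have "int \<delta> * Psi m + k * e = 0" using phi_rep[OF m] x(2) by simp
  then have "int \<delta> dvd k * e" by (metis add.commute add_eq_0_iff dvd_minus_iff dvd_triv_left)
  then have "int \<delta> dvd k" using e_cop by (simp add: coprime_commute coprime_dvd_mult_left_iff)
  then have "c [^] k \<in> M" using cpow by simp
  then show "x \<in> M" using Mmul[OF m(1)] m(2) by simp
qed

lemma N_M: "x \<in> M \<Longrightarrow> x \<in> N \<longleftrightarrow> Psi x = 0"
  using phi_M MG \<delta>pos by (auto simp: N_def)

definition c' where "c' = (SOME c'. c' \<in> carrier G \<and> phi c' = 1)"

lemma c'_ex: "\<exists>c'. c' \<in> carrier G \<and> phi c' = 1"
proof -
  obtain u v where uv: "u * e + v * int \<delta> = gcd e (int \<delta>)" using bezout_int by blast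
  then have uv1: "u * e + v * int \<delta> = 1" using e_cop by simp
  obtain y where y: "y \<in> Cn n" "psi y = v" using psi_surj by blast
  define m where "m = gi y"
  have m: "m \<in> M" "Psi m = v" using gi[OF y(1)] y(2) by (auto simp: m_def Psi_def)
  have "phi (m \<otimes> c [^] u) = int \<delta> * v + u * e" using phi_rep[OF m(1) refl] m(2) by simp
  also have "\<dots> = 1" using uv1 by (simp add: algebra_simps)
  finally show ?thesis using MG[OF m(1)] cG by (intro exI[of _ "m \<otimes> c [^] u"]) simp
qed

lemma c': "c' \<in> carrier G" "phi c' = 1"
  using someI_ex[OF c'_ex] by (simp_all add: c'_def)

definition z' where "z' = c' [^] \<delta>"

lemma z'G: "z' \<in> carrier G" using c' by (simp add: z'_def)
lemma z'M: "z' \<in> M" using pow\<delta>[OF c'(1)] by (simp add: z'_def)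
lemma phi_z': "phi z' = int \<delta>" using phi_pow_nat[OF c'(1)] c'(2) by (simp add: z'_def)
lemma Psi_z': "Psi z' = 1" using phi_M[OF z'M] phi_z' \<delta>pos by simp

lemma phi_c'pow: "phi (c' [^] (k::int)) = k" using phi_pow[OF c'(1)] c'(2) by simp
lemma phi_z'pow: "phi (z' [^] (k::int)) = k * int \<delta>" using phi_pow[OF z'G] phi_z' by simp

lemma gen_c': "generate G {c'} = {c' [^] (k::int) | k. k \<in> UNIV}"
  using generate_pow[OF c'(1)] .
lemma gen_z': "generate G {z'} = {z' [^] (k::int) | k. k \<in> UNIV}"
  using generate_pow[OF z'G] .

lemma N1: "\<one> \<in> N" using phi_1 by (simp add: N_def)

lemma NG: "x \<in> N \<Longrightarrow> x \<in> carrier G" by (simp add: N_def)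

lemma decomp: "g \<in> carrier G \<Longrightarrow> g \<otimes> c' [^] (- phi g) \<in> N \<and> g = (g \<otimes> c' [^] (- phi g)) \<otimes> c' [^] (phi g)"
proof -
  assume g: "g \<in> carrier G"
  have cc: "c' [^] (- phi g) \<in> carrier G" "c' [^] (phi g) \<in> carrier G" using c'(1) by simp_all
  have "phi (g \<otimes> c' [^] (- phi g)) = 0" using phi_mul[OF g cc(1)] phi_c'pow by simp
  then have n: "g \<otimes> c' [^] (- phi g) \<in> N" using g cc by (simp add: N_def)
  have "(g \<otimes> c' [^] (- phi g)) \<otimes> c' [^] (phi g) = g \<otimes> (c' [^] (- phi g) \<otimes> c' [^] (phi g))"
    using g cc by (simp add: m_assoc)
  also have "c' [^] (- phi g) \<otimes> c' [^] (phi g) = c' [^] (- phi g + phi g)"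
    by (simp only: int_pow_mult[OF c'(1)])
  finally have "(g \<otimes> c' [^] (- phi g)) \<otimes> c' [^] (phi g) = g" using g by simp
  then show ?thesis using n by simp
qed

lemma prod1: "N <#> generate G {c'} = carrier G"
proof
  show "N <#> generate G {c'} \<subseteq> carrier G"
    unfolding set_mult_def gen_c' using c'(1) NG by auto
  show "carrier G \<subseteq> N <#> generate G {c'}"
  proof
    fix g assume g: "g \<in> carrier G"
    have "c' [^] (phi g) \<in> generate G {c'}" unfolding gen_c' by blast
    then show "g \<in> N <#> generate G {c'}"
      unfolding set_mult_def using decomp[OF g] by blast
  qed
qed

lemma int1: "N \<inter> generate G {c'} = {\<one>}"
proof
  show "N \<inter> generate G {c'} \<subseteq> {\<one>}"
  proof
    fix x assume "x \<in> N \<inter> generate G {c'}"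
    then obtain k :: int where "x = c' [^] k" "x \<in> N" unfolding gen_c' by blast
    then have "k = 0" using phi_c'pow by (simp add: N_def)
    then show "x \<in> {\<one>}" using \<open>x = _\<close> by simp
  qed
  have "\<one> \<in> generate G {c'}" by (rule generate.one)
  then show "{\<one>} \<subseteq> N \<inter> generate G {c'}" using N1 by simp
qed

lemma int2: "N \<inter> generate G {z'} = {\<one>}"
proof
  show "N \<inter> generate G {z'} \<subseteq> {\<one>}"
  proof
    fix x assume "x \<in> N \<inter> generate G {z'}"
    then obtain k :: int where "x = z' [^] k" "x \<in> N" unfolding gen_z' by blast
    then have "k * int \<delta> = 0" using phi_z'pow by (simp add: N_def)
    then have "k = 0" using \<delta>pos by simp
    then show "x \<in> {\<one>}" using \<open>x = _\<close> by simp
  qed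
  have "\<one> \<in> generate G {z'}" by (rule generate.one)
  then show "{\<one>} \<subseteq> N \<inter> generate G {z'}" using N1 by simp
qed

lemma z'powM: "z' [^] (k::int) \<in> M"
  using subgroup_int_pow_closed[OF Msg z'M] by simp

lemma prod2: "N <#> generate G {z'} = M"
proof
  show "N <#> generate G {z'} \<subseteq> M"
  proof
    fix x assume "x \<in> N <#> generate G {z'}"
    then obtain a and k :: int where "a \<in> N" "x = a \<otimes> z' [^] k" unfolding set_mult_def gen_z' by blast
    then show "x \<in> M" using N_sub Mmul z'powM by auto
  qed
  show "M \<subseteq> N <#> generate G {z'}"
  proof
    fix x assume x: "x \<in> M"
    have xG: "x \<in> carrier G" using MG[OF x] .
    have cc: "z' [^] (- Psi x) \<in> carrier G" "z' [^] (Psi x) \<in> carrier G" using z'G by simp_all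
    have "phi (x \<otimes> z' [^] (- Psi x)) = int \<delta> * Psi x + (- Psi x) * int \<delta>"
      using phi_mul[OF xG cc(1)] phi_M[OF x] phi_z'pow by simp
    then have n: "x \<otimes> z' [^] (- Psi x) \<in> N" using xG cc by (simp add: N_def)
    have "(x \<otimes> z' [^] (- Psi x)) \<otimes> z' [^] (Psi x) = x \<otimes> (z' [^] (- Psi x) \<otimes> z' [^] (Psi x))"
      using xG cc by (simp add: m_assoc)
    also have "z' [^] (- Psi x) \<otimes> z' [^] (Psi x) = z' [^] (- Psi x + Psi x)"
      by (simp only: int_pow_mult[OF z'G])
    finally have e: "x = (x \<otimes> z' [^] (- Psi x)) \<otimes> z' [^] (Psi x)" using xG by simp
    have "z' [^] (Psi x) \<in> generate G {z'}" unfolding gen_z' by blast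
    then show "x \<in> N <#> generate G {z'}" unfolding set_mult_def using n e by blast
  qed
qed

lemma central: "g \<in> carrier G \<Longrightarrow> g \<otimes> z' = z' \<otimes> g"
proof -
  assume g: "g \<in> carrier G"
  define a where "a = g \<otimes> c' [^] (- phi g)"
  define b where "b = c' [^] (phi g)"
  have a: "a \<in> N" "g = a \<otimes> b" using decomp[OF g] by (simp_all add: a_def b_def)
  have aM: "a \<in> M" using a(1) N_sub by auto
  have aG: "a \<in> carrier G" using MG[OF aM] .
  have bG: "b \<in> carrier G" using c'(1) by (simp add: b_def)
  have zb: "b \<otimes> z' = z' \<otimes> b"
  proof -
    have "b \<otimes> z' = c' [^] (phi g + int \<delta>)" unfolding b_def z'_def
      using int_pow_mult[OF c'(1), of "phi g" "int \<delta>"] by (simp add: int_pow_int)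
    also have "\<dots> = z' \<otimes> b" unfolding b_def z'_def
      using int_pow_mult[OF c'(1), of "int \<delta>" "phi g"] by (simp add: int_pow_int add.commute)
    finally show ?thesis .
  qed
  have za: "a \<otimes> z' = z' \<otimes> a" using Mab[OF aM z'M] .
  have "g \<otimes> z' = a \<otimes> (b \<otimes> z')" using a(2) aG bG z'G by (simp add: m_assoc)
  also have "\<dots> = (a \<otimes> z') \<otimes> b" using zb aG bG z'G by (simp add: m_assoc)
  also have "\<dots> = z' \<otimes> g" using za a(2) aG bG z'G by (simp add: m_assoc)
  finally show ?thesis .
qed

lemma z'_iso: "subgroup_generated G {z'} \<cong> integer_group"
proof -
  let ?S = "subgroup_generated G {z'}"
  have car: "carrier ?S = range (\<lambda>k::int. z' [^] k)"
    by (rule carrier_subgroup_generated_by_singleton[OF z'G])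
  have "(\<lambda>k::int. z' [^] k) \<in> iso integer_group ?S"
  proof (rule isoI)
    show "(\<lambda>k::int. z' [^] k) \<in> hom integer_group ?S"
    proof (rule homI)
      show "z' [^] x \<in> carrier ?S" for x :: int using car by simp
      show "z' [^] (x \<otimes>\<^bsub>integer_group\<^esub> y) = z' [^] x \<otimes>\<^bsub>?S\<^esub> z' [^] y" for x y :: int
        using int_pow_mult[OF z'G] by (simp add: subgroup_generated_def)
    qed
    show "bij_betw (\<lambda>k::int. z' [^] k) (carrier integer_group) (carrier ?S)"
    proof (rule bij_betw_imageI)
      show "inj_on (\<lambda>k::int. z' [^] k) (carrier integer_group)"
      proof (rule inj_onI)
        fix a b :: int assume "z' [^] a = z' [^] b"
        then have "phi (z' [^] a) = phi (z' [^] b)" by simp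
        then show "a = b" using phi_z'pow \<delta>pos by simp
      qed
      show "(\<lambda>k::int. z' [^] k) ` carrier integer_group = carrier ?S" using car by simp
    qed
  qed
  then have "integer_group \<cong> ?S" by (auto simp: is_iso_def)
  then show ?thesis by (rule group.iso_sym[OF group_integer_group])
qed

lemma N_rank: "free_abelian_of_rank G N (n - 1)"
proof -
  let ?K = "{y \<in> Cn n. psi y = 0}"
  let ?F = "free_Abelian_group {..<n}"
  have Nsg: "subgroup N G" using N_normal by (simp add: normal_imp_subgroup)
  have fz: "f z' \<in> Cn n" "psi (f z') = 1" using fC[OF z'M] Psi_z' by (simp_all add: Psi_def)
  have Kcl: "gclosed ?K" and KF: "subgroup_generated ?F ?K \<cong> free_Abelian_group {..<n-1}"
    using rank_ker[OF psi_add fz] by simp_all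
  have Ksg: "subgroup ?K ?F" by (rule gclosed_subgroup[OF Kcl]) (auto simp: Cn_def)
  have fN: "f ` N = ?K"
  proof
    show "f ` N \<subseteq> ?K" using N_sub fC N_M by (auto simp: Psi_def)
    show "?K \<subseteq> f ` N"
    proof
      fix y assume y: "y \<in> ?K"
      then have g: "gi y \<in> M" "f (gi y) = y" using gi by auto
      then have "gi y \<in> N" using N_M y by (simp add: Psi_def)
      then show "y \<in> f ` N" using g(2) by force
    qed
  qed
  have "f \<in> iso (subgroup_generated G N) (subgroup_generated ?F ?K)"
  proof (rule isoI)
    have carN: "carrier (subgroup_generated G N) = N"
      by (rule subgroup.carrier_subgroup_generated_subgroup[OF Nsg])
    have carK: "carrier (subgroup_generated ?F ?K) = ?K"
      by (rule subgroup.carrier_subgroup_generated_subgroup[OF Ksg])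
    show "f \<in> hom (subgroup_generated G N) (subgroup_generated ?F ?K)"
    proof (rule homI)
      show "f x \<in> carrier (subgroup_generated ?F ?K)" if "x \<in> carrier (subgroup_generated G N)" for x
        using that carN carK fN by auto
      show "f (x \<otimes>\<^bsub>subgroup_generated G N\<^esub> y) = f x \<otimes>\<^bsub>subgroup_generated ?F ?K\<^esub> f y"
        if "x \<in> carrier (subgroup_generated G N)" "y \<in> carrier (subgroup_generated G N)" for x y
      proof -
        have "x \<in> M" "y \<in> M" using that carN N_sub by auto
        then show ?thesis by (simp add: subgroup_generated_def fhom)
      qed
    qed
    have "inj_on f N" using fbij N_sub by (meson bij_betw_def inj_on_subset)
    then show "bij_betw f (carrier (subgroup_generated G N)) (carrier (subgroup_generated ?F ?K))"
      unfolding carN carK using fN by (simp add: bij_betw_def)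
  qed
  then have "subgroup_generated G N \<cong> subgroup_generated ?F ?K" by (auto simp: is_iso_def)
  then have "subgroup_generated G N \<cong> free_Abelian_group {..<n-1}" using KF by (rule iso_trans)
  then show ?thesis using Nsg by (simp add: free_abelian_of_rank_def)
qed

lemma main:
  "\<exists>N c. c \<in> carrier G \<and> N \<lhd> G \<and> N \<subseteq> M \<and> free_abelian_of_rank G N (n - 1)
      \<and> (\<forall>g \<in> carrier G. g \<otimes> (c [^] \<delta>) = (c [^] \<delta>) \<otimes> g)
      \<and> (subgroup_generated G {c [^] \<delta>} \<cong> integer_group)
      \<and> N \<inter> generate G {c [^] \<delta>} = {\<one>}
      \<and> N <#> generate G {c [^] \<delta>} = M
      \<and> N \<inter> generate G {c} = {\<one>}
      \<and> N <#> generate G {c} = carrier G"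
  using c'(1) N_normal N_sub N_rank central z'_iso int2 prod2 int1 prod1
  unfolding z'_def by blast

end

theorem lemma3p1:
  fixes \<Gamma> :: "('a, 'b) monoid_scheme" and M :: "'a set" and n \<delta> :: nat
  assumes "bieberbach_group \<Gamma> M n"
    and "n \<ge> 1"
    and "cyclic_group (\<Gamma> Mod M)"
    and "order (\<Gamma> Mod M) = \<delta>"
    and "squarefree \<delta>"
  shows "\<exists>N c. c \<in> carrier \<Gamma> \<and> N \<lhd> \<Gamma> \<and> N \<subseteq> M \<and> free_abelian_of_rank \<Gamma> N (n - 1)
      \<and> (\<forall>g \<in> carrier \<Gamma>. g \<otimes>\<^bsub>\<Gamma>\<^esub> (c [^]\<^bsub>\<Gamma>\<^esub> \<delta>) = (c [^]\<^bsub>\<Gamma>\<^esub> \<delta>) \<otimes>\<^bsub>\<Gamma>\<^esub> g)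
      \<and> (subgroup_generated \<Gamma> {c [^]\<^bsub>\<Gamma>\<^esub> \<delta>} \<cong> integer_group)
      \<and> N \<inter> generate \<Gamma> {c [^]\<^bsub>\<Gamma>\<^esub> \<delta>} = {\<one>\<^bsub>\<Gamma>\<^esub>}
      \<and> N <#>\<^bsub>\<Gamma>\<^esub> generate \<Gamma> {c [^]\<^bsub>\<Gamma>\<^esub> \<delta>} = M
      \<and> N \<inter> generate \<Gamma> {c} = {\<one>\<^bsub>\<Gamma>\<^esub>}
      \<and> N <#>\<^bsub>\<Gamma>\<^esub> generate \<Gamma> {c} = carrier \<Gamma>"
proof -
  note bb = assms(1)[unfolded bieberbach_group_def]
  have grp: "group \<Gamma>" and tf: "torsion_free \<Gamma>" and Mn: "M \<lhd> \<Gamma>"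
    and mas: "maximal_abelian_subgroup \<Gamma> M" and far: "free_abelian_of_rank \<Gamma> M n"
    and fin: "finite (rcosets\<^bsub>\<Gamma>\<^esub> M)" using bb by auto
  interpret G: group \<Gamma> by (rule grp)
  have Msg: "subgroup M \<Gamma>" using Mn by (simp add: normal_imp_subgroup)
  have MG: "M \<subseteq> carrier \<Gamma>" using subgroup.subset[OF Msg] .
  have Mab: "\<And>x y. x \<in> M \<Longrightarrow> y \<in> M \<Longrightarrow> x \<otimes>\<^bsub>\<Gamma>\<^esub> y = y \<otimes>\<^bsub>\<Gamma>\<^esub> x"
    using mas unfolding maximal_abelian_subgroup_def abelian_subset_def by auto
  obtain f where fiso: "f \<in> iso (subgroup_generated \<Gamma> M) (free_Abelian_group {..<n})"
    using far unfolding free_abelian_of_rank_def is_iso_def by auto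
  define Q where "Q = \<Gamma> Mod M"
  interpret Q: group Q unfolding Q_def by (rule normal.factorgroup_is_group[OF Mn])
  have carQ: "carrier Q = rcosets\<^bsub>\<Gamma>\<^esub> M" by (simp add: Q_def FactGroup_def)
  have ordQ: "order Q = \<delta>" using assms(4) by (simp add: Q_def)
  have \<delta>pos: "\<delta> > 0" using Q.order_gt_0_iff_finite fin carQ ordQ by simp
  have cos_eq: "M #>\<^bsub>\<Gamma>\<^esub> a = M \<longleftrightarrow> a \<in> M" if "a \<in> carrier \<Gamma>" for a
    using G.coset_join1[OF _ that Msg] G.coset_join2[OF that Msg] by blast
  have powQ: "(M #>\<^bsub>\<Gamma>\<^esub> a) [^]\<^bsub>Q\<^esub> (k::int) = M #>\<^bsub>\<Gamma>\<^esub> (a [^]\<^bsub>\<Gamma>\<^esub> k)" if "a \<in> carrier \<Gamma>" for a k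
    unfolding Q_def by (rule normal.FactGroup_int_pow[OF Mn that])
  have powQn: "(M #>\<^bsub>\<Gamma>\<^esub> a) [^]\<^bsub>Q\<^esub> (k::nat) = M #>\<^bsub>\<Gamma>\<^esub> (a [^]\<^bsub>\<Gamma>\<^esub> k)" if "a \<in> carrier \<Gamma>" for a k
    unfolding Q_def by (rule normal.FactGroup_pow[OF Mn that])
  have cosQ: "M #>\<^bsub>\<Gamma>\<^esub> a \<in> carrier Q" if "a \<in> carrier \<Gamma>" for a
    using that carQ by (auto simp: RCOSETS_def)
  have oneQ: "\<one>\<^bsub>Q\<^esub> = M" by (simp add: Q_def)
  have pow\<delta>: "x [^]\<^bsub>\<Gamma>\<^esub> \<delta> \<in> M" if x: "x \<in> carrier \<Gamma>" for x
  proof -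
    have "(M #>\<^bsub>\<Gamma>\<^esub> x) [^]\<^bsub>Q\<^esub> (order Q) = \<one>\<^bsub>Q\<^esub>" by (rule Q.pow_order_eq_1[OF cosQ[OF x]])
    then have "M #>\<^bsub>\<Gamma>\<^esub> (x [^]\<^bsub>\<Gamma>\<^esub> \<delta>) = M" using powQn[OF x] ordQ oneQ by simp
    then show ?thesis using cos_eq x by simp
  qed
  obtain xq where xq: "xq \<in> carrier Q" "carrier Q = range (\<lambda>k::int. xq [^]\<^bsub>Q\<^esub> k)"
    using assms(3) Q.cyclic_group unfolding Q_def by auto
  obtain c0 where c0: "c0 \<in> carrier \<Gamma>" "xq = M #>\<^bsub>\<Gamma>\<^esub> c0"
    using xq(1) carQ by (auto simp: RCOSETS_def)
  have "Q.ord xq = order (subgroup_generated Q {xq})" by (rule Q.cyclic_order_is_ord[OF xq(1)])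
  also have "\<dots> = order Q" unfolding order_def
    using Q.carrier_subgroup_generated_by_singleton[OF xq(1)] xq(2) by simp
  finally have ordx: "Q.ord xq = \<delta>" using ordQ by simp
  have cpow0: "c0 [^]\<^bsub>\<Gamma>\<^esub> k \<in> M \<longleftrightarrow> int \<delta> dvd k" for k :: int
  proof -
    have "c0 [^]\<^bsub>\<Gamma>\<^esub> k \<in> M \<longleftrightarrow> M #>\<^bsub>\<Gamma>\<^esub> (c0 [^]\<^bsub>\<Gamma>\<^esub> k) = M" using cos_eq c0(1) by simp
    also have "\<dots> \<longleftrightarrow> xq [^]\<^bsub>Q\<^esub> k = \<one>\<^bsub>Q\<^esub>" using powQ[OF c0(1)] c0(2) oneQ by simp
    also have "\<dots> \<longleftrightarrow> int \<delta> dvd k" using Q.int_pow_eq_id[OF xq(1)] ordx by simp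
    finally show ?thesis .
  qed
  have rep0: "\<exists>m\<in>M. \<exists>k::int. g = m \<otimes>\<^bsub>\<Gamma>\<^esub> c0 [^]\<^bsub>\<Gamma>\<^esub> k" if g: "g \<in> carrier \<Gamma>" for g
  proof -
    obtain k :: int where k: "M #>\<^bsub>\<Gamma>\<^esub> g = xq [^]\<^bsub>Q\<^esub> k" using cosQ[OF g] xq(2) by auto
    then have "M #>\<^bsub>\<Gamma>\<^esub> g = M #>\<^bsub>\<Gamma>\<^esub> (c0 [^]\<^bsub>\<Gamma>\<^esub> k)" using powQ[OF c0(1)] c0(2) by simp
    then have "M #>\<^bsub>\<Gamma>\<^esub> (g \<otimes>\<^bsub>\<Gamma>\<^esub> inv\<^bsub>\<Gamma>\<^esub> (c0 [^]\<^bsub>\<Gamma>\<^esub> k)) = M"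
      using G.coset_mult_inv2[OF _ g _ MG] c0(1) by simp
    then have m: "g \<otimes>\<^bsub>\<Gamma>\<^esub> inv\<^bsub>\<Gamma>\<^esub> (c0 [^]\<^bsub>\<Gamma>\<^esub> k) \<in> M" using cos_eq g c0(1) by simp
    have "g = (g \<otimes>\<^bsub>\<Gamma>\<^esub> inv\<^bsub>\<Gamma>\<^esub> (c0 [^]\<^bsub>\<Gamma>\<^esub> k)) \<otimes>\<^bsub>\<Gamma>\<^esub> c0 [^]\<^bsub>\<Gamma>\<^esub> k"
      using g c0(1) by (simp add: G.m_assoc)
    then show ?thesis using m by blast
  qed
  obtain c where cG: "c \<in> carrier \<Gamma>"
    and rep: "\<And>g. g \<in> carrier \<Gamma> \<Longrightarrow> \<exists>m\<in>M. \<exists>k::int. g = m \<otimes>\<^bsub>\<Gamma>\<^esub> c [^]\<^bsub>\<Gamma>\<^esub> k"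
    and cpow: "\<And>k::int. c [^]\<^bsub>\<Gamma>\<^esub> k \<in> M \<longleftrightarrow> int \<delta> dvd k"
    and c1: "\<delta> = 1 \<Longrightarrow> c \<noteq> \<one>\<^bsub>\<Gamma>\<^esub>"
  proof (cases "\<delta> = 1")
    case False
    have d1: "\<delta> = 1 \<Longrightarrow> c0 \<noteq> \<one>\<^bsub>\<Gamma>\<^esub>" using False by simp
    show ?thesis by (rule that[OF c0(1) rep0 cpow0 d1])
  next
    case True
    have carM: "carrier (subgroup_generated \<Gamma> M) = M"
      by (rule subgroup.carrier_subgroup_generated_subgroup[OF Msg])
    have fhom: "f \<in> hom (subgroup_generated \<Gamma> M) (free_Abelian_group {..<n})" using fiso by (simp add: iso_def)
    have fbij: "bij_betw f M (carrier (free_Abelian_group {..<n}))" using fiso carM by (simp add: iso_def)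
    have "frag_of 0 \<in> carrier (free_Abelian_group {..<n})" using assms(2) by simp
    then obtain c where c: "c \<in> M" "f c = frag_of 0" using fbij by (metis bij_betw_def imageE)
    have one: "\<one>\<^bsub>\<Gamma>\<^esub> \<in> M" by (rule subgroup.one_closed[OF Msg])
    have "f (\<one>\<^bsub>\<Gamma>\<^esub> \<otimes>\<^bsub>subgroup_generated \<Gamma> M\<^esub> \<one>\<^bsub>\<Gamma>\<^esub>) = f \<one>\<^bsub>\<Gamma>\<^esub> \<otimes>\<^bsub>free_Abelian_group {..<n}\<^esub> f \<one>\<^bsub>\<Gamma>\<^esub>"
      by (rule hom_mult[OF fhom]) (simp_all add: one carM)
    then have "f \<one>\<^bsub>\<Gamma>\<^esub> = f \<one>\<^bsub>\<Gamma>\<^esub> + f \<one>\<^bsub>\<Gamma>\<^esub>" by (simp add: subgroup_generated_def)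
    then have f1: "f \<one>\<^bsub>\<Gamma>\<^esub> = 0" by (metis add_cancel_right_right)
    have cn1: "c \<noteq> \<one>\<^bsub>\<Gamma>\<^esub>" using c(2) f1 by auto
    have cGc: "c \<in> carrier \<Gamma>" using c(1) MG by auto
    have allM: "g \<in> M" if g: "g \<in> carrier \<Gamma>" for g
    proof -
      obtain m and k :: int where mk: "m \<in> M" "g = m \<otimes>\<^bsub>\<Gamma>\<^esub> c0 [^]\<^bsub>\<Gamma>\<^esub> k" using rep0[OF g] by blast
      have "c0 [^]\<^bsub>\<Gamma>\<^esub> k \<in> M" using cpow0 True by simp
      then show ?thesis using mk subgroup.m_closed[OF Msg] by simp
    qed
    show ?thesis
    proof (rule that[OF cGc])
      fix g assume g: "g \<in> carrier \<Gamma>"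
      have "g = g \<otimes>\<^bsub>\<Gamma>\<^esub> c [^]\<^bsub>\<Gamma>\<^esub> (0::int)" using g by simp
      then show "\<exists>m\<in>M. \<exists>k::int. g = m \<otimes>\<^bsub>\<Gamma>\<^esub> c [^]\<^bsub>\<Gamma>\<^esub> k" using allM[OF g] by blast
    next
      fix k :: int
      show "c [^]\<^bsub>\<Gamma>\<^esub> k \<in> M \<longleftrightarrow> int \<delta> dvd k" using allM[OF G.int_pow_closed[OF cGc]] True by simp
    next
      show "c \<noteq> \<one>\<^bsub>\<Gamma>\<^esub>" by (rule cn1)
    qed
  qed
  have ax: "bsetup_axioms \<Gamma> M f c \<delta> n"
    unfolding bsetup_axioms_def using Mn Mab fiso cG rep cpow \<delta>pos tf pow\<delta> c1 assms(5) by auto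
  interpret B: bsetup \<Gamma> M f c \<delta> n by (rule bsetup.intro[OF grp ax])
  show ?thesis by (rule B.main)
qed

end
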